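(* Let $n\ge 1$ and $m\ge 1$ be integers and let $H_m(\mathbb B)$ be the analytic functional Hilbert space on the open unit ball $\mathbb B\subset\mathbb C^n$ with reproducing kernel $K_m(z,w)=(1-\langle z,w\rangle)^{-m}$. Let $r\in\mathbb N$ and let $T\in L(H_m(\mathbb B))$ be homogeneous of degree $r$ (i.e. $T\mathbb H_j\subset\mathbb H_{j+r}$ for all $j\ge 0$) and satisfy \[ M^{\prime *}_zTM^\prime_z = P_{{\rm Im}M^*_z}\Big(\oplus \sum^{m-1}_{j=0}(-1)^j\binom{m}{j+1}\sigma^j_{M_z}(T)\Big)P_{{\rm Im}M^*_z}. \] Then $Tf=(T1)f$ for all $f\in H_m(\mathbb B)$.
   Context: $H_m(\mathbb B)=\{f=\sum_{\alpha\in\mathbb N^n}f_\alpha z^\alpha\in\mathcal O(\mathbb B):\ \|f\|^2=\sum_\alpha |f_\alpha|^2/\rho_m(\alpha)<\infty\}$ with $\rho_m(\alpha)=\frac{(m+|\alpha|-1)!}{\alpha!(m-1)!}$. Let $\mathbb H_k$ denote the space of homogeneous polynomials of degree $k$, so $H_m(\mathbb B)$ is the orthogonal sum of the $\mathbb H_k$, and every $f$ has homogeneous expansion $f=\sum_k f_k$, $f_k\in\mathbb H_k$. $M_z:H_m(\mathbb B)^n\to H_m(\mathbb B)$, $(f_i)\mapsto\sum_i z_if_i$, is the row multiplication operator (it has closed range), $M_z^*:H_m(\mathbb B)\to H_m(\mathbb B)^n$, $f\mapsto (M_{z_i}^*f)_i$, is its adjoint, and $P_{{\rm Im}M_z^*}$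 is the orthogonal projection of $H_m(\mathbb B)^n$ onto the closed range of $M_z^*$. Let $\delta\in L(H_m(\mathbb B))$ be the diagonal operator $\delta(\sum_k f_k)=f_0+\sum_{k\ge1}\frac{m+k-1}{k}f_k$, and define $M_z'=\delta M_z:H_m(\mathbb B)^n\to H_m(\mathbb B)$, with adjoint $M_z'^*$. For $X\in L(H_m(\mathbb B))$, $\sigma_{M_z}(X)=\sum_{i=1}^n M_{z_i}XM_{z_i}^*$, $\sigma^j_{M_z}$ is its $j$-th iterate ($\sigma^0_{M_z}(X)=X$), and $\oplus X$ denotes $X\oplus\cdots\oplus X$ ($n$ copies) on $H_m(\mathbb B)^n$. *)

theory Defs
  imports "HOL-Analysis.Analysis" "HOL-Library.Function_Algebras"
begin

text \<open>The index type 'n (finite)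
  plays the role of {1..n}; a multi-index alpha in N^n is a function 'n => nat, and a
  holomorphic function f = sum f_alpha z^alpha is represented by its Taylor coefficient
  family alpha |-> f_alpha.\<close>

type_synonym 'n mindex = "'n \<Rightarrow> nat"
type_synonym 'n coeffs = "'n mindex \<Rightarrow> complex"

definition mabs :: "'n::finite mindex \<Rightarrow> nat" where
  "mabs \<alpha> = (\<Sum>i\<in>UNIV. \<alpha> i)"

definition mfact :: "'n::finite mindex \<Rightarrow> nat" where
  "mfact \<alpha> = (\<Prod>i\<in>UNIV. fact (\<alpha> i))"

definition rho :: "nat \<Rightarrow> 'n::finite mindex \<Rightarrow> real" where
  "rho m \<alpha> = fact (m + mabs \<alpha> - 1) / (real (mfact \<alpha>) * fact (m - 1))"

definition Hm :: "nat \<Rightarrow> ('n::finite coeffs) set" where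
  "Hm m = {f. (\<lambda>\<alpha>. (cmod (f \<alpha>))\<^sup>2 / rho m \<alpha>) summable_on UNIV}"

definition ipH :: "nat \<Rightarrow> 'n::finite coeffs \<Rightarrow> 'n coeffs \<Rightarrow> complex" where
  "ipH m f g = (\<Sum>\<^sub>\<infinity>\<alpha>. f \<alpha> * cnj (g \<alpha>) / complex_of_real (rho m \<alpha>))"

definition normH :: "nat \<Rightarrow> 'n::finite coeffs \<Rightarrow> real" where
  "normH m f = sqrt (\<Sum>\<^sub>\<infinity>\<alpha>. (cmod (f \<alpha>))\<^sup>2 / rho m \<alpha>)"

definition Hhom :: "nat \<Rightarrow> nat \<Rightarrow> ('n::finite coeffs) set" where
  "Hhom m k = {f \<in> Hm m. \<forall>\<alpha>. mabs \<alpha> \<noteq> k \<longrightarrow> f \<alpha> = 0}"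

definition bounded_op :: "nat \<Rightarrow> ('n::finite coeffs \<Rightarrow> 'n coeffs) \<Rightarrow> bool" where
  "bounded_op m T \<longleftrightarrow>
     (\<forall>f\<in>Hm m. T f \<in> Hm m) \<and>
     (\<forall>f\<in>Hm m. \<forall>g\<in>Hm m. T (f + g) = T f + T g) \<and>
     (\<forall>f\<in>Hm m. \<forall>c. T (\<lambda>\<alpha>. c * f \<alpha>) = (\<lambda>\<alpha>. c * T f \<alpha>)) \<and>
     (\<exists>C. \<forall>f\<in>Hm m. normH m (T f) \<le> C * normH m f)"

definition adj :: "'a set \<Rightarrow> ('a \<Rightarrow> 'a \<Rightarrow> complex) \<Rightarrow> 'b::zero set \<Rightarrow> ('b \<Rightarrow> 'b \<Rightarrow> complex)
                   \<Rightarrow> ('a \<Rightarrow> 'b) \<Rightarrow> ('b \<Rightarrow> 'a::zero)" where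
  "adj A ia B ib T = (THE S. (\<forall>y. y \<notin> B \<longrightarrow> S y = 0) \<and> (\<forall>y\<in>B. S y \<in> A) \<and>
                           (\<forall>x\<in>A. \<forall>y\<in>B. ib (T x) y = ia x (S y)))"

definition hclosure :: "'a::minus set \<Rightarrow> ('a \<Rightarrow> 'a \<Rightarrow> complex) \<Rightarrow> 'a set \<Rightarrow> 'a set" where
  "hclosure A ia V = {y \<in> A. \<forall>e>0. \<exists>v\<in>V. sqrt (Re (ia (y - v) (y - v))) < e}"

definition orth_proj :: "('a::minus \<Rightarrow> 'a \<Rightarrow> complex) \<Rightarrow> 'a set \<Rightarrow> 'a \<Rightarrow> 'a" where
  "orth_proj ia V x = (THE y. y \<in> V \<and> (\<forall>v\<in>V. ia (x - y) v = 0))"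

definition Hn :: "nat \<Rightarrow> ('n::finite \<Rightarrow> 'n coeffs) set" where
  "Hn m = {F. \<forall>i. F i \<in> Hm m}"

definition ipHn :: "nat \<Rightarrow> ('n::finite \<Rightarrow> 'n coeffs) \<Rightarrow> ('n \<Rightarrow> 'n coeffs) \<Rightarrow> complex" where
  "ipHn m F G = (\<Sum>i\<in>UNIV. ipH m (F i) (G i))"

definition Mzi :: "'n::finite \<Rightarrow> 'n coeffs \<Rightarrow> 'n coeffs" where
  "Mzi i f = (\<lambda>\<alpha>. if \<alpha> i = 0 then 0 else f (\<alpha>(i := \<alpha> i - 1)))"

definition Mzi_adj :: "nat \<Rightarrow> 'n::finite \<Rightarrow> 'n coeffs \<Rightarrow> 'n coeffs" where
  "Mzi_adj m i = adj (Hm m) (ipH m) (Hm m) (ipH m) (Mzi i)"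

definition Mz :: "('n::finite \<Rightarrow> 'n coeffs) \<Rightarrow> 'n coeffs" where
  "Mz F = (\<Sum>i\<in>UNIV. Mzi i (F i))"

definition Mz_adj :: "nat \<Rightarrow> 'n::finite coeffs \<Rightarrow> ('n \<Rightarrow> 'n coeffs)" where
  "Mz_adj m = adj (Hn m) (ipHn m) (Hm m) (ipH m) Mz"

definition P_ImMz_adj :: "nat \<Rightarrow> ('n::finite \<Rightarrow> 'n coeffs) \<Rightarrow> ('n \<Rightarrow> 'n coeffs)" where
  "P_ImMz_adj m = orth_proj (ipHn m) (hclosure (Hn m) (ipHn m) (Mz_adj m ` Hm m))"

definition delta :: "nat \<Rightarrow> 'n::finite coeffs \<Rightarrow> 'n coeffs" where
  "delta m f = (\<lambda>\<alpha>. (if mabs \<alpha> = 0 then 1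
                      else complex_of_real (real (m + mabs \<alpha> - 1) / real (mabs \<alpha>))) * f \<alpha>)"

definition Mz' :: "nat \<Rightarrow> ('n::finite \<Rightarrow> 'n coeffs) \<Rightarrow> 'n coeffs" where
  "Mz' m F = delta m (Mz F)"

definition Mz'_adj :: "nat \<Rightarrow> 'n::finite coeffs \<Rightarrow> ('n \<Rightarrow> 'n coeffs)" where
  "Mz'_adj m = adj (Hn m) (ipHn m) (Hm m) (ipH m) (Mz' m)"

definition sigma :: "nat \<Rightarrow> ('n::finite coeffs \<Rightarrow> 'n coeffs) \<Rightarrow> ('n coeffs \<Rightarrow> 'n coeffs)" where
  "sigma m X = (\<lambda>f. \<Sum>i\<in>UNIV. Mzi i (X (Mzi_adj m i f)))"

definition oplus_op :: "('n::finite coeffs \<Rightarrow> 'n coeffs) \<Rightarrow> ('n \<Rightarrow> 'n coeffs) \<Rightarrow> ('n \<Rightarrow> 'n coeffs)" where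
  "oplus_op X = (\<lambda>F i. X (F i))"

definition one_fun :: "'n::finite coeffs" where
  "one_fun = (\<lambda>\<alpha>. if \<alpha> = (\<lambda>_. 0) then 1 else 0)"

definition fmult :: "'n::finite coeffs \<Rightarrow> 'n coeffs \<Rightarrow> 'n coeffs" where
  "fmult a b = (\<lambda>\<alpha>. \<Sum>\<beta>\<in>{\<beta>. \<beta> \<le> \<alpha>}. a \<beta> * b (\<alpha> - \<beta>))"

end

theory Submission
  imports Defs "HOL-Computational_Algebra.Formal_Power_Series"
begin

fun lam :: "nat \<Rightarrow> nat \<Rightarrow> nat \<Rightarrow> real" where
  "lam m 0 d = 1"
| "lam m (Suc j) d = lam m j (d - 1) * real d / real (m + d - 1)"

lemma lam_closed: "m \<ge> 1 \<Longrightarrow> lam m l d * real ((m + d - 1) choose l) = real (d choose l)"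
proof (induction l arbitrary: d)
  case 0 then show ?case by simp
next
  case (Suc l)
  show ?case
  proof (cases d)
    case 0 then show ?thesis by simp
  next
    case (Suc e)
    have IH: "lam m l e * real ((m + e - 1) choose l) = real (e choose l)" using Suc.IH Suc.prems by blast
    have N: "m + d - 1 = Suc (m + e - 1)" using Suc Suc.prems by simp
    have b1: "real (Suc (m+e-1)) * real ((m+e-1) choose l) = real ((Suc (m+e-1)) choose Suc l) * real (Suc l)"
      using Suc_times_binomial_eq[of "m+e-1" l] by (metis of_nat_mult)
    have b2: "real (Suc e) * real (e choose l) = real (Suc e choose Suc l) * real (Suc l)"
      using Suc_times_binomial_eq[of e l] by (metis of_nat_mult)
    have "lam m (Suc l) d * real ((m + d - 1) choose Suc l) * real (Suc l)
        = lam m l e * real (Suc e) / real (Suc (m+e-1)) * (real (Suc (m+e-1)) * real ((m+e-1) choose l))"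
      using Suc N b1 by (simp add: field_simps)
    also have "\<dots> = real (Suc e) * (lam m l e * real ((m+e-1) choose l))"
      by (simp add: field_simps)
    also have "\<dots> = real (d choose Suc l) * real (Suc l)" using IH b2 Suc by simp
    finally have "lam m (Suc l) d * real ((m + d - 1) choose Suc l) * real (Suc l) = real (d choose Suc l) * real (Suc l)" .
    then show ?thesis by (metis mult_right_cancel of_nat_eq_0_iff nat.distinct(1))
  qed
qed

lemma vand: "m \<ge> 1 \<Longrightarrow> d \<ge> 1 \<Longrightarrow>
  (\<Sum>k=0..d. (-1::real)^k * real (m choose k) * real ((m + d - 1 - k) choose (d - k))) = 0"
proof -
  assume m: "m \<ge> 1" and d: "d \<ge> 1"
  have "(\<Sum>k=0..d. ((of_nat m::real) gchoose k) * ((- of_nat m) gchoose (d - k))) = (of_nat m + - of_nat m) gchoose d"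
    by (rule gbinomial_Vandermonde)
  also have "\<dots> = 0" using d by (simp add: gbinomial_0_left)
  finally have V: "(\<Sum>k=0..d. ((of_nat m::real) gchoose k) * ((- of_nat m) gchoose (d - k))) = 0" .
  have T: "((of_nat m::real) gchoose k) * ((- of_nat m) gchoose (d - k)) = (-1)^d * ((-1::real)^k * real (m choose k) * real ((m + d - 1 - k) choose (d - k)))"
    if "k \<in> {0..d}" for k
  proof -
    have kd: "k \<le> d" using that by simp
    have "((- of_nat m::real) gchoose (d - k)) = (-1)^(d-k) * ((of_nat (d-k) - (- of_nat m) - 1) gchoose (d - k))"
      by (rule gbinomial_negated_upper)
    also have "(of_nat (d-k) - (- of_nat m) - 1 :: real) = of_nat (m + d - 1 - k)" using kd m by (simp add: of_nat_diff)
    finally have A: "((- of_nat m::real) gchoose (d - k)) = (-1)^(d-k) * real ((m + d - 1 - k) choose (d - k))"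
      by (simp add: binomial_gbinomial)
    have S: "(-1::real)^(d-k) = (-1)^d * (-1)^k"
    proof -
      have "(-1::real)^d = (-1)^(d-k) * (-1)^k" using kd by (metis le_add_diff_inverse2 power_add)
      then show ?thesis by (metis (no_types, lifting) mult.assoc mult.right_neutral power2_minus power_one power_mult_distrib [symmetric] power2_eq_square neg_one_even_power even_add odd_add power_add le_add_diff_inverse2 kd) 
    qed
    show ?thesis using A S by (simp add: binomial_gbinomial)
  qed
  have "(\<Sum>k=0..d. ((of_nat m::real) gchoose k) * ((- of_nat m) gchoose (d - k))) =
        (-1)^d * (\<Sum>k=0..d. (-1::real)^k * real (m choose k) * real ((m + d - 1 - k) choose (d - k)))"
    by (simp add: T sum_distrib_left)
  with V show ?thesis by simp
qed

lemma lam_eq: assumes m: "m \<ge> 1" and d: "d \<ge> 1" and lm: "l \<le> m"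
  shows "lam m l d * real ((m + d - 1) choose d) = (if l \<le> d then real ((m + d - 1 - l) choose (d - l)) else 0)"
proof (cases "l \<le> m + d - 1")
  case True
  have pos: "real ((m + d - 1) choose l) > 0" using True by simp
  have L: "lam m l d = real (d choose l) / real ((m + d - 1) choose l)"
    using lam_closed[OF m, of l d] pos by (simp add: field_simps)
  show ?thesis
  proof (cases "l \<le> d")
    case True
    have "real ((m + d - 1) choose d) * real (d choose l) = real ((m+d-1) choose l) * real ((m + d - 1 - l) choose (d - l))"
    proof -
      have "d \<le> m + d - 1" using m by simp
      then have "((m + d - 1) choose d) * (d choose l) = ((m+d-1) choose l) * ((m + d - 1 - l) choose (d - l))"
        using choose_mult[of l d "m+d-1"] True by blast
      then show ?thesis by (metis of_nat_mult)
    qed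
    then have "lam m l d * real ((m + d - 1) choose d) = real ((m+d-1) choose l) * real ((m + d - 1 - l) choose (d - l)) / real ((m + d - 1) choose l)"
      using L by (simp add: field_simps)
    then show ?thesis using pos True by simp
  next
    case False then show ?thesis using L by simp
  qed
next
  case False
  then show ?thesis using lm d by simp
qed

lemma lam_sum0: assumes m: "m \<ge> 1" and d: "d \<ge> 1"
  shows "(\<Sum>l=0..m. (-1::real)^l * real (m choose l) * lam m l d) = 0"
proof -
  have pos: "real ((m + d - 1) choose d) > 0" using m by simp
  have "(\<Sum>l=0..m. (-1::real)^l * real (m choose l) * lam m l d) * real ((m + d - 1) choose d)
      = (\<Sum>l=0..m. (-1::real)^l * real (m choose l) * (if l \<le> d then real ((m + d - 1 - l) choose (d - l)) else 0))"
    unfolding sum_distrib_right by (rule sum.cong) (auto simp: lam_eq[OF m d, symmetric] mult.assoc)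
  also have "\<dots> = (\<Sum>l=0..m+d. (-1::real)^l * real (m choose l) * (if l \<le> d then real ((m + d - 1 - l) choose (d - l)) else 0))"
    by (rule sum.mono_neutral_left) auto
  also have "\<dots> = (\<Sum>l=0..d. (-1::real)^l * real (m choose l) * real ((m + d - 1 - l) choose (d - l)))"
    by (rule sum.mono_neutral_cong_right) auto
  also have "\<dots> = 0" by (rule vand[OF m d])
  finally show ?thesis using pos by simp
qed

lemma lam_sum1: assumes m: "m \<ge> 1" and d: "d \<ge> 1"
  shows "(\<Sum>j<m. (-1::real)^j * real (m choose (j+1)) * lam m (Suc j) d) = 1"
proof -
  have "(\<Sum>l=0..m. (-1::real)^l * real (m choose l) * lam m l d) = 1 + (\<Sum>l=Suc 0..m. (-1::real)^l * real (m choose l) * lam m l d)"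
    by (simp add: sum.atLeast_Suc_atMost)
  also have "(\<Sum>l=Suc 0..m. (-1::real)^l * real (m choose l) * lam m l d) = (\<Sum>j<m. (-1::real)^(Suc j) * real (m choose Suc j) * lam m (Suc j) d)"
  proof -
    have mm: "m = Suc (m - 1)" using m by simp
    have "(\<Sum>l=Suc 0..m. (-1::real)^l * real (m choose l) * lam m l d) = (\<Sum>l=Suc 0..Suc (m-1). (-1::real)^l * real (m choose l) * lam m l d)"
      using mm by simp
    also have "\<dots> = (\<Sum>j=0..m-1. (-1::real)^(Suc j) * real (m choose Suc j) * lam m (Suc j) d)"
      by (rule sum.shift_bounds_cl_Suc_ivl)
    also have "{0..m-1} = {..<m}" using m by auto
    finally show ?thesis .
  qed
  finally show ?thesis using lam_sum0[OF m d] by (simp add: sum_negf)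
qed



lemma sum_upd: "(\<Sum>j\<in>(UNIV::'n::finite set). (\<alpha>(i := x)) j) + \<alpha> i = (\<Sum>j\<in>UNIV. \<alpha> j) + (x::nat)"
proof -
  have "(\<Sum>j\<in>UNIV. (\<alpha>(i := x)) j) = x + (\<Sum>j\<in>UNIV-{i}. \<alpha> j)"
    by (simp add: sum.remove[of UNIV i])
  moreover have "(\<Sum>j\<in>UNIV. \<alpha> j) = \<alpha> i + (\<Sum>j\<in>UNIV-{i}. \<alpha> j)"
    by (simp add: sum.remove[of UNIV i])
  ultimately show ?thesis by simp
qed

lemma mabs_upd: "mabs ((\<alpha>::'n::finite mindex)(i := Suc (\<alpha> i))) = Suc (mabs \<alpha>)"
  using sum_upd[of \<alpha> i "Suc (\<alpha> i)"] unfolding mabs_def by simp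

lemma mabs_dec: "(\<alpha>::'n::finite mindex) i > 0 \<Longrightarrow> mabs (\<alpha>(i := \<alpha> i - 1)) = mabs \<alpha> - 1"
  using sum_upd[of \<alpha> i "\<alpha> i - 1"] unfolding mabs_def by simp

lemma mfact_upd: "mfact ((\<alpha>::'n::finite mindex)(i := Suc (\<alpha> i))) = mfact \<alpha> * Suc (\<alpha> i)"
proof -
  have "mfact (\<alpha>(i := Suc (\<alpha> i))) = fact (Suc (\<alpha> i)) * (\<Prod>j\<in>UNIV-{i}. fact (\<alpha> j))"
    unfolding mfact_def by (simp add: prod.remove[of UNIV i])
  moreover have "mfact \<alpha> = fact (\<alpha> i) * (\<Prod>j\<in>UNIV-{i}. fact (\<alpha> j))"
    unfolding mfact_def by (simp add: prod.remove[of UNIV i])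
  ultimately show ?thesis by (simp add: algebra_simps)
qed

lemma mfact_pos: "mfact \<alpha> > 0"
  unfolding mfact_def by (simp add: prod_pos)

lemma mabs_zero_iff: "mabs (\<alpha>::'n::finite mindex) = 0 \<longleftrightarrow> \<alpha> = (\<lambda>_. 0)"
  unfolding mabs_def by (auto simp: fun_eq_iff)

lemma mabs_ge: "(\<alpha>::'n::finite mindex) i \<le> mabs \<alpha>"
  unfolding mabs_def by (rule member_le_sum) auto

lemma sq_bound: "((x::real) + y)\<^sup>2 \<le> 2 * x\<^sup>2 + 2 * y\<^sup>2"
proof -
  have "0 \<le> (x - y)\<^sup>2" by simp
  then show ?thesis unfolding power2_eq_square by (simp add: algebra_simps)
qed

lemma prod_bound: "(x::real) \<ge> 0 \<Longrightarrow> y \<ge> 0 \<Longrightarrow> x * y \<le> x\<^sup>2 + y\<^sup>2"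
proof -
  assume "x \<ge> 0" "y \<ge> 0"
  have "0 \<le> (x - y)\<^sup>2" by simp
  moreover have "0 \<le> x * y" using \<open>x \<ge> 0\<close> \<open>y \<ge> 0\<close> by simp
  ultimately show ?thesis unfolding power2_eq_square by (simp add: algebra_simps)
qed

locale Hsp = fixes m :: nat assumes m1: "1 \<le> m"
begin

lemma rho_pos: "rho m \<alpha> > 0"
  unfolding rho_def using mfact_pos[of \<alpha>] by simp

lemma rho_upd: "rho m ((\<alpha>::'n::finite mindex)(i := Suc (\<alpha> i))) = rho m \<alpha> * real (m + mabs \<alpha>) / real (Suc (\<alpha> i))"
proof -
  have f: "(fact (m + mabs \<alpha>) :: real) = real (m + mabs \<alpha>) * fact (m + mabs \<alpha> - 1)"
    proof -
    have "m + mabs \<alpha> = Suc (m + mabs \<alpha> - 1)" using m1 by simp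
    then show ?thesis by (metis fact_Suc of_nat_fact diff_Suc_1)
  qed
  show ?thesis unfolding rho_def mabs_upd mfact_upd using f by (simp add: field_simps)
qed

definition nsq :: "'n::finite coeffs \<Rightarrow> real" where
  "nsq f = (\<Sum>\<^sub>\<infinity>\<alpha>. (cmod (f \<alpha>))\<^sup>2 / rho m \<alpha>)"

lemma Hm_iff: "f \<in> Hm m \<longleftrightarrow> (\<lambda>\<alpha>. (cmod (f \<alpha>))\<^sup>2 / rho m \<alpha>) summable_on UNIV"
  unfolding Hm_def by simp

lemma Hm_dom: "g \<in> Hm m \<Longrightarrow> (\<And>\<alpha>. cmod (f \<alpha>) \<le> B * cmod (g \<alpha>)) \<Longrightarrow> f \<in> Hm m"
proof -
  assume g: "g \<in> Hm m" and b: "\<And>\<alpha>. cmod (f \<alpha>) \<le> B * cmod (g \<alpha>)"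
  have s: "(\<lambda>\<alpha>. B\<^sup>2 * ((cmod (g \<alpha>))\<^sup>2 / rho m \<alpha>)) summable_on UNIV"
    using g unfolding Hm_iff by (rule summable_on_cmult_right)
  show ?thesis unfolding Hm_iff
  proof (rule summable_on_comparison_test[OF s])
    fix \<alpha> :: "'a mindex"
    have "(cmod (f \<alpha>))\<^sup>2 \<le> (B * cmod (g \<alpha>))\<^sup>2"
      using b[of \<alpha>] by (simp add: power_mono)
    then show "(cmod (f \<alpha>))\<^sup>2 / rho m \<alpha> \<le> B\<^sup>2 * ((cmod (g \<alpha>))\<^sup>2 / rho m \<alpha>)"
      using rho_pos[of \<alpha>] by (simp add: divide_right_mono power_mult_distrib)
    show "0 \<le> (cmod (f \<alpha>))\<^sup>2 / rho m \<alpha>" using rho_pos[of \<alpha>] by simp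
  qed
qed

lemma Hm_zero: "(0::'n::finite coeffs) \<in> Hm m" "(\<lambda>_. 0::complex) \<in> Hm m"
  unfolding Hm_iff by simp_all

lemma Hm_add: assumes f: "f \<in> Hm m" and g: "g \<in> Hm m" shows "f + g \<in> Hm m"
proof -
  have s: "(\<lambda>\<alpha>. 2 * ((cmod (f \<alpha>))\<^sup>2 / rho m \<alpha>) + 2 * ((cmod (g \<alpha>))\<^sup>2 / rho m \<alpha>)) summable_on UNIV"
    using f g unfolding Hm_iff by (intro summable_on_add summable_on_cmult_right)
  show ?thesis unfolding Hm_iff
  proof (rule summable_on_comparison_test[OF s])
    fix \<alpha> :: "'a mindex"
    have "cmod (f \<alpha> + g \<alpha>) \<le> cmod (f \<alpha>) + cmod (g \<alpha>)" by (rule norm_triangle_ineq)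
    then have "(cmod (f \<alpha> + g \<alpha>))\<^sup>2 \<le> (cmod (f \<alpha>) + cmod (g \<alpha>))\<^sup>2" by (simp add: power_mono)
    also have "\<dots> \<le> 2 * (cmod (f \<alpha>))\<^sup>2 + 2 * (cmod (g \<alpha>))\<^sup>2"
      by (rule sq_bound)
    finally have "(cmod ((f + g) \<alpha>))\<^sup>2 \<le> 2 * (cmod (f \<alpha>))\<^sup>2 + 2 * (cmod (g \<alpha>))\<^sup>2" by simp
    then show "(cmod ((f + g) \<alpha>))\<^sup>2 / rho m \<alpha> \<le> 2 * ((cmod (f \<alpha>))\<^sup>2 / rho m \<alpha>) + 2 * ((cmod (g \<alpha>))\<^sup>2 / rho m \<alpha>)"
      using rho_pos[of \<alpha>] by (simp add: divide_right_mono add_divide_distrib[symmetric])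
    show "0 \<le> (cmod ((f + g) \<alpha>))\<^sup>2 / rho m \<alpha>" using rho_pos[of \<alpha>] by simp
  qed
qed

lemma Hm_scale: "f \<in> Hm m \<Longrightarrow> (\<lambda>\<alpha>. c * f \<alpha>) \<in> Hm m"
  by (rule Hm_dom[where B="cmod c"]) (auto simp: norm_mult)

lemma Hm_uminus: "f \<in> Hm m \<Longrightarrow> - f \<in> Hm m"
  by (rule Hm_dom[where B=1]) auto

lemma Hm_diff: "f \<in> Hm m \<Longrightarrow> g \<in> Hm m \<Longrightarrow> f - g \<in> Hm m"
  using Hm_add[of f "- g"] Hm_uminus[of g] by simp

lemma Hm_sum: "(\<And>i. i \<in> I \<Longrightarrow> F i \<in> Hm m) \<Longrightarrow> (\<Sum>i\<in>I. F i) \<in> Hm m"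
  by (induction I rule: infinite_finite_induct) (auto intro: Hm_add Hm_zero)

lemma ip_summable: assumes f: "f \<in> Hm m" and g: "g \<in> Hm m"
  shows "(\<lambda>\<alpha>. f \<alpha> * cnj (g \<alpha>) / complex_of_real (rho m \<alpha>)) summable_on UNIV"
proof -
  have s: "(\<lambda>\<alpha>. (cmod (f \<alpha>))\<^sup>2 / rho m \<alpha> + (cmod (g \<alpha>))\<^sup>2 / rho m \<alpha>) summable_on UNIV"
    using f g unfolding Hm_iff by (intro summable_on_add)
  have "(\<lambda>\<alpha>. norm (f \<alpha> * cnj (g \<alpha>) / complex_of_real (rho m \<alpha>))) summable_on UNIV"
  proof (rule summable_on_comparison_test[OF s])
    fix \<alpha> :: "'a mindex"
    have r: "rho m \<alpha> > 0" by (rule rho_pos)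
    have "cmod (f \<alpha>) * cmod (g \<alpha>) \<le> (cmod (f \<alpha>))\<^sup>2 + (cmod (g \<alpha>))\<^sup>2"
      by (rule prod_bound) simp_all
    then have "cmod (f \<alpha>) * cmod (g \<alpha>) / rho m \<alpha> \<le> ((cmod (f \<alpha>))\<^sup>2 + (cmod (g \<alpha>))\<^sup>2) / rho m \<alpha>"
      using r by (simp add: divide_right_mono)
    then show "norm (f \<alpha> * cnj (g \<alpha>) / complex_of_real (rho m \<alpha>)) \<le> (cmod (f \<alpha>))\<^sup>2 / rho m \<alpha> + (cmod (g \<alpha>))\<^sup>2 / rho m \<alpha>"
      using r by (simp add: norm_mult norm_divide add_divide_distrib)
  qed simp
  then show ?thesis
    using summable_on_iff_abs_summable_on_complex by blast
qed

end


context Hsp begin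

lemma ipH_add_left: "f \<in> Hm m \<Longrightarrow> g \<in> Hm m \<Longrightarrow> h \<in> Hm m \<Longrightarrow> ipH m (f + g) h = ipH m f h + ipH m g h"
  unfolding ipH_def by (simp add: distrib_right add_divide_distrib infsum_add ip_summable)

lemma ipH_add_right: "f \<in> Hm m \<Longrightarrow> g \<in> Hm m \<Longrightarrow> h \<in> Hm m \<Longrightarrow> ipH m h (f + g) = ipH m h f + ipH m h g"
  unfolding ipH_def by (simp add: distrib_left add_divide_distrib infsum_add ip_summable)

lemma ipH_scale_left: assumes "f \<in> Hm m" "g \<in> Hm m" shows "ipH m (\<lambda>\<alpha>. c * f \<alpha>) g = c * ipH m f g"
proof -
  have "ipH m (\<lambda>\<alpha>. c * f \<alpha>) g = infsum (\<lambda>\<alpha>. c * (f \<alpha> * cnj (g \<alpha>) / complex_of_real (rho m \<alpha>))) UNIV"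
    unfolding ipH_def by (simp add: mult.assoc)
  also have "\<dots> = c * ipH m f g" unfolding ipH_def
    by (rule infsum_cmult_right) (use ip_summable[OF assms] in auto)
  finally show ?thesis .
qed

lemma ipH_scale_right: assumes "f \<in> Hm m" "g \<in> Hm m" shows "ipH m f (\<lambda>\<alpha>. c * g \<alpha>) = cnj c * ipH m f g"
proof -
  have "ipH m f (\<lambda>\<alpha>. c * g \<alpha>) = infsum (\<lambda>\<alpha>. cnj c * (f \<alpha> * cnj (g \<alpha>) / complex_of_real (rho m \<alpha>))) UNIV"
    unfolding ipH_def by (simp add: ac_simps)
  also have "\<dots> = cnj c * ipH m f g" unfolding ipH_def
    by (rule infsum_cmult_right) (use ip_summable[OF assms] in auto)
  finally show ?thesis .
qed

lemma ipH_zero_left[simp]: "ipH m 0 h = 0" "ipH m (\<lambda>_. 0) h = 0"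
  unfolding ipH_def by simp_all

lemma ipH_zero_right[simp]: "ipH m h 0 = 0" "ipH m h (\<lambda>_. 0) = 0"
  unfolding ipH_def by simp_all

lemma ipH_uminus_left: "f \<in> Hm m \<Longrightarrow> h \<in> Hm m \<Longrightarrow> ipH m (- f) h = - ipH m f h"
  using ipH_scale_left[of f h "-1"] by (simp add: fun_Compl_def)

lemma ipH_diff_left: "f \<in> Hm m \<Longrightarrow> g \<in> Hm m \<Longrightarrow> h \<in> Hm m \<Longrightarrow> ipH m (f - g) h = ipH m f h - ipH m g h"
  using ipH_add_left[of f "- g" h] ipH_uminus_left[of g h] Hm_uminus[of g] by simp

lemma ipH_uminus_right: "f \<in> Hm m \<Longrightarrow> h \<in> Hm m \<Longrightarrow> ipH m h (- f) = - ipH m h f"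
  using ipH_scale_right[of h f "-1"] by (simp add: fun_Compl_def)

lemma ipH_diff_right: "f \<in> Hm m \<Longrightarrow> g \<in> Hm m \<Longrightarrow> h \<in> Hm m \<Longrightarrow> ipH m h (f - g) = ipH m h f - ipH m h g"
  using ipH_add_right[of f "- g" h] ipH_uminus_right[of g h] Hm_uminus[of g] by simp

lemma ipH_sum_left: "(\<And>i. i \<in> I \<Longrightarrow> F i \<in> Hm m) \<Longrightarrow> h \<in> Hm m \<Longrightarrow> ipH m (\<Sum>i\<in>I. F i) h = (\<Sum>i\<in>I. ipH m (F i) h)"
proof (induction I rule: infinite_finite_induct)
  case (insert x I)
  have e: "(\<Sum>i\<in>insert x I. F i) = F x + (\<Sum>i\<in>I. F i)" by (simp only: sum.insert[OF insert(1,2)])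
  have "ipH m (F x + (\<Sum>i\<in>I. F i)) h = ipH m (F x) h + ipH m (\<Sum>i\<in>I. F i) h"
    by (rule ipH_add_left) (use insert in \<open>auto intro: Hm_sum\<close>)
  then show ?case using insert by (simp only: e sum.insert[OF insert(1,2)]) simp
qed simp_all

lemma nsq_summable: "f \<in> Hm m \<Longrightarrow> (\<lambda>\<alpha>. (cmod (f \<alpha>))\<^sup>2 / rho m \<alpha>) summable_on UNIV"
  using Hm_iff by blast

lemma ipH_self: assumes "f \<in> Hm m" shows "ipH m f f = complex_of_real (nsq f)"
proof -
  have "((\<lambda>\<alpha>. complex_of_real ((cmod (f \<alpha>))\<^sup>2 / rho m \<alpha>)) has_sum complex_of_real (nsq f)) UNIV"
    unfolding nsq_def by (rule has_sum_of_real) (use nsq_summable[OF assms] in auto)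
  moreover have "(\<lambda>\<alpha>. complex_of_real ((cmod (f \<alpha>))\<^sup>2 / rho m \<alpha>)) = (\<lambda>\<alpha>. f \<alpha> * cnj (f \<alpha>) / complex_of_real (rho m \<alpha>))"
    by (auto simp: fun_eq_iff complex_norm_square[symmetric])
  ultimately show ?thesis unfolding ipH_def using infsumI by fastforce
qed

lemma nsq_nonneg: "nsq f \<ge> 0"
  unfolding nsq_def by (rule infsum_nonneg) (simp add: rho_pos less_imp_le)

lemma nsq_zero: assumes "f \<in> Hm m" "nsq f = 0" shows "f = 0"
proof
  fix \<alpha>
  have "(cmod (f \<alpha>))\<^sup>2 / rho m \<alpha> = 0"
    by (rule nonneg_infsum_le_0D[where f="\<lambda>\<alpha>. (cmod (f \<alpha>))\<^sup>2 / rho m \<alpha>" and A=UNIV]) (use assms nsq_summable in \<open>auto simp: nsq_def rho_pos less_imp_le\<close>)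
  then show "f \<alpha> = 0 \<alpha>" using rho_pos[of \<alpha>] by simp
qed

lemma coef_bound: assumes "f \<in> Hm m" shows "(cmod (f \<alpha>))\<^sup>2 / rho m \<alpha> \<le> nsq f"
proof -
  have "infsum (\<lambda>\<alpha>. (cmod (f \<alpha>))\<^sup>2 / rho m \<alpha>) {\<alpha>} \<le> infsum (\<lambda>\<alpha>. (cmod (f \<alpha>))\<^sup>2 / rho m \<alpha>) UNIV"
    by (rule infsum_mono_neutral) (use nsq_summable[OF assms] in \<open>auto simp: rho_pos less_imp_le\<close>)
  then show ?thesis unfolding nsq_def by simp
qed

lemma two_ab: assumes "s > 0" shows "2 * a * b \<le> s * a\<^sup>2 + b\<^sup>2 / (s::real)"
proof -
  have "0 \<le> (s * a - b)\<^sup>2" by simp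
  then have "2 * s * a * b \<le> s * (s * a\<^sup>2) + b\<^sup>2" unfolding power2_eq_square by (simp add: algebra_simps)
  then have "2 * a * b * s \<le> (s * a\<^sup>2 + b\<^sup>2 / s) * s" using assms by (simp add: algebra_simps)
  then show ?thesis using assms by simp
qed

lemma ip_bound: assumes f: "f \<in> Hm m" and g: "g \<in> Hm m" and s: "s > 0"
  shows "cmod (ipH m f g) \<le> (s * nsq f + nsq g / s) / 2"
proof -
  let ?h = "\<lambda>\<alpha>. f \<alpha> * cnj (g \<alpha>) / complex_of_real (rho m \<alpha>)"
  let ?b = "\<lambda>\<alpha>. (s / 2) * ((cmod (f \<alpha>))\<^sup>2 / rho m \<alpha>) + (1 / (2 * s)) * ((cmod (g \<alpha>))\<^sup>2 / rho m \<alpha>)"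
  have hs: "?h summable_on UNIV" by (rule ip_summable[OF f g])
  then have ha: "(\<lambda>\<alpha>. norm (?h \<alpha>)) summable_on UNIV" using summable_on_iff_abs_summable_on_complex by metis
  have bs: "?b summable_on UNIV"
    using f g unfolding Hm_iff by (intro summable_on_add summable_on_cmult_right)
  have "cmod (ipH m f g) \<le> infsum (\<lambda>\<alpha>. norm (?h \<alpha>)) UNIV"
    unfolding ipH_def by (rule norm_infsum_bound[OF ha])
  also have "\<dots> \<le> infsum ?b UNIV"
  proof (rule infsum_mono[OF ha bs])
    fix \<alpha> :: "'a mindex"
    have r: "rho m \<alpha> > 0" by (rule rho_pos)
    have "2 * cmod (f \<alpha>) * cmod (g \<alpha>) \<le> s * (cmod (f \<alpha>))\<^sup>2 + (cmod (g \<alpha>))\<^sup>2 / s" by (rule two_ab[OF s])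
    then have "cmod (f \<alpha>) * cmod (g \<alpha>) / rho m \<alpha> \<le> ((s * (cmod (f \<alpha>))\<^sup>2 + (cmod (g \<alpha>))\<^sup>2 / s) / 2) / rho m \<alpha>"
      using r by (intro divide_right_mono) simp_all
    also have "\<dots> = ?b \<alpha>" using r s by (simp add: field_simps)
    finally show "norm (?h \<alpha>) \<le> ?b \<alpha>" using r by (simp add: norm_mult norm_divide)
  qed
  also have "infsum ?b UNIV = (s / 2) * nsq f + (1 / (2 * s)) * nsq g"
    unfolding nsq_def using f g unfolding Hm_iff
    apply (subst infsum_add)
      apply (rule summable_on_cmult_right, assumption)
     apply (rule summable_on_cmult_right, assumption)
    apply (subst infsum_cmult_right, assumption)
    apply (subst infsum_cmult_right, assumption)
    apply (rule refl)
    done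
  also have "\<dots> = (s * nsq f + nsq g / s) / 2" by (simp add: field_simps)
  finally show ?thesis .
qed

definition ind :: "'n::finite mindex \<Rightarrow> 'n coeffs" where
  "ind \<beta> = (\<lambda>\<alpha>. if \<alpha> = \<beta> then 1 else 0)"

lemma ind_Hm: "ind \<beta> \<in> Hm m"
proof -
  have "(\<lambda>\<alpha>. (cmod (ind \<beta> \<alpha>))\<^sup>2 / rho m \<alpha>) summable_on {\<beta>}" by simp
  then show ?thesis unfolding Hm_iff
    by (rule summable_on_cong_neutral[THEN iffD1, rotated -1]) (auto simp: ind_def)
qed

lemma ipH_ind: "ipH m (ind \<beta>) g = cnj (g \<beta>) / complex_of_real (rho m \<beta>)"
proof -
  have "ipH m (ind \<beta>) g = infsum (\<lambda>\<alpha>. ind \<beta> \<alpha> * cnj (g \<alpha>) / complex_of_real (rho m \<alpha>)) {\<beta>}"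
    unfolding ipH_def by (rule infsum_cong_neutral) (auto simp: ind_def)
  then show ?thesis by (simp add: ind_def)
qed

lemma ip_ext: assumes "\<And>x. x \<in> Hm m \<Longrightarrow> ipH m x u = ipH m x v" shows "u = v"
proof
  fix \<beta>
  have "cnj (u \<beta>) / complex_of_real (rho m \<beta>) = cnj (v \<beta>) / complex_of_real (rho m \<beta>)"
    using assms[OF ind_Hm, of \<beta>] by (simp add: ipH_ind)
  moreover have "complex_of_real (rho m \<beta>) \<noteq> 0" using rho_pos[of \<beta>] by simp
  ultimately show "u \<beta> = v \<beta>" by (metis divide_cancel_right complex_cnj_cancel_iff)
qed

end


lemma adj_eqI:
  assumes z: "\<forall>y. y \<notin> B \<longrightarrow> S y = 0" and s: "\<forall>y\<in>B. S y \<in> A"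
    and p: "\<forall>x\<in>A. \<forall>y\<in>B. ib (T x) y = ia x (S y)"
    and ext: "\<And>u v. u \<in> A \<Longrightarrow> v \<in> A \<Longrightarrow> (\<forall>x\<in>A. ia x u = ia x v) \<Longrightarrow> u = v"
  shows "adj A ia B ib T = S"
  unfolding adj_def
proof (rule the_equality)
  show "(\<forall>y. y \<notin> B \<longrightarrow> S y = 0) \<and> (\<forall>y\<in>B. S y \<in> A) \<and> (\<forall>x\<in>A. \<forall>y\<in>B. ib (T x) y = ia x (S y))"
    using assms by blast
next
  fix S' assume a: "(\<forall>y. y \<notin> B \<longrightarrow> S' y = 0) \<and> (\<forall>y\<in>B. S' y \<in> A) \<and> (\<forall>x\<in>A. \<forall>y\<in>B. ib (T x) y = ia x (S' y))"
  show "S' = S"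
  proof
    fix y show "S' y = S y"
    proof (cases "y \<in> B")
      case True
      show ?thesis by (rule ext) (use a s p True in auto)
    next
      case False then show ?thesis using a z by auto
    qed
  qed
qed

definition up :: "'n \<Rightarrow> 'n mindex \<Rightarrow> 'n mindex" where
  "up i \<beta> = \<beta>(i := Suc (\<beta> i))"

lemma up_inj: "inj (up i)"
proof (rule injI)
  fix a b assume h: "up i a = up i b"
  show "a = b"
  proof
    fix j
    from h have "up i a j = up i b j" by simp
    then show "a j = b j" by (cases "j = i") (auto simp: up_def)
  qed
qed

lemma up_range: "range (up i) = {\<alpha>::'n mindex. \<alpha> i \<noteq> 0}"
proof
  show "range (up i) \<subseteq> {\<alpha>. \<alpha> i \<noteq> 0}" by (auto simp: up_def)
  show "{\<alpha>. \<alpha> i \<noteq> 0} \<subseteq> range (up i)"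
  proof
    fix \<alpha> :: "'n mindex" assume "\<alpha> \<in> {\<alpha>. \<alpha> i \<noteq> 0}"
    then have "\<alpha> = up i (\<alpha>(i := \<alpha> i - 1))" by (auto simp: up_def fun_eq_iff)
    then show "\<alpha> \<in> range (up i)" by blast
  qed
qed

lemma Mzi_up: "Mzi i f (up i \<beta>) = f \<beta>"
  unfolding Mzi_def up_def by simp

context Hsp begin

definition Sadj :: "'n::finite \<Rightarrow> 'n coeffs \<Rightarrow> 'n coeffs" where
  "Sadj i g = (\<lambda>\<beta>. g (up i \<beta>) * complex_of_real (real (Suc (\<beta> i)) / real (m + mabs \<beta>)))"

lemma rho_up: "rho m (up i \<beta>) = rho m \<beta> * real (m + mabs \<beta>) / real (Suc (\<beta> i))"
  unfolding up_def by (rule rho_upd)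

lemma ratio_le: "real (Suc (\<beta> i)) \<le> real (m + mabs (\<beta>::'n::finite mindex))"
  using mabs_ge[of \<beta> i] m1 by simp

lemma rho_up_ge: "rho m (\<beta>::'n::finite mindex) \<le> rho m (up i \<beta>)"
proof -
  have "1 \<le> real (m + mabs \<beta>) / real (Suc (\<beta> i))" using ratio_le[of \<beta> i] by simp
  then have "rho m \<beta> * 1 \<le> rho m \<beta> * (real (m + mabs \<beta>) / real (Suc (\<beta> i)))"
    using rho_pos[of \<beta>] by (intro mult_left_mono) auto
  then show ?thesis unfolding rho_up by simp
qed

lemma Mzi_Hm: assumes f: "f \<in> Hm m" shows "Mzi i f \<in> Hm m"
proof -
  let ?H = "\<lambda>\<alpha>. (cmod (Mzi i f \<alpha>))\<^sup>2 / rho m \<alpha>"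
  have "(\<lambda>\<beta>. (cmod (f \<beta>))\<^sup>2 / rho m (up i \<beta>)) summable_on UNIV"
  proof (rule summable_on_comparison_test[OF nsq_summable[OF f]])
    fix \<beta> :: "'a mindex"
    show "(cmod (f \<beta>))\<^sup>2 / rho m (up i \<beta>) \<le> (cmod (f \<beta>))\<^sup>2 / rho m \<beta>"
      using rho_pos[of \<beta>] rho_up_ge[of \<beta> i] by (intro divide_left_mono) auto
    show "0 \<le> (cmod (f \<beta>))\<^sup>2 / rho m (up i \<beta>)" using rho_pos[of "up i \<beta>"] by simp
  qed
  then have "(?H \<circ> up i) summable_on UNIV" by (simp add: o_def Mzi_up)
  then have "?H summable_on range (up i)" by (subst summable_on_reindex[OF up_inj])
  moreover have "?H x = 0" if "x \<in> UNIV - range (up i)" for x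
  proof -
    have "x i = 0" using that unfolding up_range by simp
    then show ?thesis by (simp add: Mzi_def)
  qed
  ultimately have "?H summable_on UNIV"
    using summable_on_cong_neutral[of UNIV "range (up i)" ?H ?H] by simp
  then show ?thesis unfolding Hm_iff .
qed

lemma Sadj_Hm: assumes g: "g \<in> Hm m" shows "Sadj i g \<in> Hm m"
proof -
  let ?H = "\<lambda>\<alpha>. (cmod (g \<alpha>))\<^sup>2 / rho m \<alpha>"
  have "?H summable_on range (up i)"
    by (rule summable_on_subset[OF nsq_summable[OF g]]) simp
  then have s: "(?H \<circ> up i) summable_on UNIV" by (subst (asm) summable_on_reindex[OF up_inj])
  show ?thesis unfolding Hm_iff
  proof (rule summable_on_comparison_test[OF s])
    fix \<beta> :: "'a mindex"
    have r: "rho m \<beta> > 0" by (rule rho_pos)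
    have q: "real (m + mabs \<beta>) > 0" using m1 by simp
    have le: "real (Suc (\<beta> i)) / real (m + mabs \<beta>) \<le> 1" using ratio_le[of \<beta> i] q by simp
    define c where "c = real (Suc (\<beta> i)) / real (m + mabs \<beta>)"
    have c: "c > 0" unfolding c_def using q by simp
    have n: "cmod (Sadj i g \<beta>) = cmod (g (up i \<beta>)) * c"
      unfolding Sadj_def c_def[symmetric] using c by (simp add: norm_mult)
    have rr: "rho m (up i \<beta>) = rho m \<beta> / c" unfolding rho_up c_def using q by (simp add: field_simps)
    have "(cmod (Sadj i g \<beta>))\<^sup>2 / rho m \<beta> = (cmod (g (up i \<beta>)))\<^sup>2 / rho m (up i \<beta>) * c"
      unfolding n rr using r c by (simp add: field_simps power2_eq_square)
    also have "\<dots> \<le> (cmod (g (up i \<beta>)))\<^sup>2 / rho m (up i \<beta>) * 1"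
      using rho_pos[of "up i \<beta>"] le unfolding c_def by (intro mult_left_mono) auto
    finally show "(cmod (Sadj i g \<beta>))\<^sup>2 / rho m \<beta> \<le> (?H \<circ> up i) \<beta>" by simp
    show "0 \<le> (cmod (Sadj i g \<beta>))\<^sup>2 / rho m \<beta>" using r by simp
  qed
qed

lemma ipH_Mzi: "ipH m (Mzi i f) g = ipH m f (Sadj i g)"
proof -
  let ?H = "\<lambda>\<alpha>. Mzi i f \<alpha> * cnj (g \<alpha>) / complex_of_real (rho m \<alpha>)"
  have "ipH m (Mzi i f) g = infsum ?H (range (up i))"
    unfolding ipH_def
  proof (rule infsum_cong_neutral)
    fix x assume "x \<in> UNIV - range (up i)"
    then have "x i = 0" unfolding up_range by simp
    then show "?H x = 0" by (simp add: Mzi_def)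
  qed auto
  also have "\<dots> = infsum (?H \<circ> up i) UNIV" by (rule infsum_reindex[OF up_inj])
  also have "\<dots> = ipH m f (Sadj i g)" unfolding ipH_def
  proof (rule infsum_cong)
    fix \<beta> :: "'a mindex"
    have r: "rho m \<beta> > 0" by (rule rho_pos)
    have q: "real (m + mabs \<beta>) > 0" using m1 by simp
    show "(?H \<circ> up i) \<beta> = f \<beta> * cnj (Sadj i g \<beta>) / complex_of_real (rho m \<beta>)"
      unfolding Sadj_def o_def Mzi_up rho_up using r q by (simp add: field_simps)
  qed
  finally show ?thesis .
qed

lemma Mzi_adj_eq: "Mzi_adj m i = (\<lambda>g. if g \<in> Hm m then Sadj i g else 0)"
  unfolding Mzi_adj_def
  by (rule adj_eqI) (auto simp: Sadj_Hm Hm_zero ipH_Mzi intro: ip_ext)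

end


lemma sum_fun_apply: "(\<Sum>i\<in>I. F i) x = (\<Sum>i\<in>I. F i x)"
  by (induction I rule: infinite_finite_induct) auto

lemma Mz_apply: "Mz F \<alpha> = (\<Sum>i\<in>UNIV. Mzi i (F i) \<alpha>)"
  unfolding Mz_def by (rule sum_fun_apply)

lemma Mz_zero_deg: "mabs \<alpha> = 0 \<Longrightarrow> Mz F \<alpha> = 0"
  unfolding Mz_apply Mzi_def by (simp add: mabs_zero_iff)

lemma Mzi_diff: "Mzi i (f - g) = Mzi i f - Mzi i g"
  unfolding Mzi_def by auto

lemma Mz_diff: "Mz (F - G) = Mz F - Mz G"
  unfolding Mz_def by (simp add: Mzi_diff sum_subtractf)

context Hsp begin

lemma Hn_iff: "F \<in> Hn m \<longleftrightarrow> (\<forall>i. F i \<in> Hm m)"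
  unfolding Hn_def by simp

lemma Hn_diff: "F \<in> Hn m \<Longrightarrow> G \<in> Hn m \<Longrightarrow> F - G \<in> Hn m"
  unfolding Hn_iff by (auto intro: Hm_diff)

lemma Hn_zero: "(0::'n::finite \<Rightarrow> 'n coeffs) \<in> Hn m"
  unfolding Hn_iff by (simp add: Hm_zero)

lemma ipHn_ext: assumes "\<And>x. x \<in> Hn m \<Longrightarrow> ipHn m x u = ipHn m x v" shows "u = (v :: 'n::finite \<Rightarrow> 'n coeffs)"
proof
  fix i
  show "u i = v i"
  proof (rule ip_ext)
    fix x :: "'n coeffs" assume x: "x \<in> Hm m"
    define X where "X = (\<lambda>j. if j = i then x else (0::'n coeffs))"
    have X: "X \<in> Hn m" unfolding Hn_iff X_def using x by (simp add: Hm_zero)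
    have e: "ipHn m X w = ipH m x (w i)" for w
    proof -
      have "ipHn m X w = (\<Sum>j\<in>UNIV. if j = i then ipH m x (w j) else 0)"
        unfolding ipHn_def by (rule sum.cong) (auto simp: X_def)
      then show ?thesis by simp
    qed
    show "ipH m x (u i) = ipH m x (v i)" using assms[OF X] by (simp add: e)
  qed
qed

lemma Mz_Hm: "F \<in> Hn m \<Longrightarrow> Mz F \<in> Hm m"
  unfolding Mz_def Hn_iff by (auto intro!: Hm_sum Mzi_Hm)

definition SS :: "'n::finite coeffs \<Rightarrow> ('n \<Rightarrow> 'n coeffs)" where
  "SS g = (\<lambda>i. Sadj i g)"

lemma SS_Hn: "g \<in> Hm m \<Longrightarrow> SS g \<in> Hn m"
  unfolding SS_def Hn_iff by (auto intro: Sadj_Hm)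

lemma ipH_Mz: assumes "F \<in> Hn m" "g \<in> Hm m" shows "ipH m (Mz F) g = ipHn m F (SS g)"
proof -
  have "ipH m (Mz F) g = (\<Sum>i\<in>UNIV. ipH m (Mzi i (F i)) g)"
    unfolding Mz_def by (rule ipH_sum_left) (use assms in \<open>auto simp: Hn_iff intro: Mzi_Hm\<close>)
  also have "\<dots> = ipHn m F (SS g)" unfolding ipHn_def SS_def by (simp add: ipH_Mzi)
  finally show ?thesis .
qed

lemma Mz_adj_eq: "Mz_adj m = (\<lambda>g. if g \<in> Hm m then SS g else 0)"
  unfolding Mz_adj_def
  by (rule adj_eqI) (auto simp: SS_Hn Hn_zero ipH_Mz intro: ipHn_ext)

definition dfac :: "'n::finite mindex \<Rightarrow> real" where
  "dfac \<alpha> = (if mabs \<alpha> = 0 then 1 else real (m + mabs \<alpha> - 1) / real (mabs \<alpha>))"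

lemma delta_alt: "delta m f \<alpha> = complex_of_real (dfac \<alpha>) * f \<alpha>"
  unfolding delta_def dfac_def by simp

lemma dfac_bound: "0 \<le> dfac \<alpha> \<and> dfac \<alpha> \<le> real m"
proof (cases "mabs \<alpha> = 0")
  case True then show ?thesis unfolding dfac_def using m1 by simp
next
  case False
  then have k: "mabs \<alpha> \<ge> 1" by simp
  have "real (m + mabs \<alpha> - 1) \<le> real m * real (mabs \<alpha>)"
  proof -
    obtain k' where kk: "mabs \<alpha> = Suc k'" using k by (metis Suc_pred' less_eq_Suc_le One_nat_def)
    have "k' \<le> m * k'" using m1 by simp
    then have "m + mabs \<alpha> - 1 \<le> m * mabs \<alpha>" unfolding kk by simp
    then show ?thesis by (metis of_nat_le_iff of_nat_mult)
  qed
  then show ?thesis unfolding dfac_def using False k by (simp add: divide_le_eq)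
qed

lemma delta_Hm: "f \<in> Hm m \<Longrightarrow> delta m f \<in> Hm m"
  by (rule Hm_dom[where B="real m"]) (auto simp: delta_alt norm_mult dfac_bound intro: mult_right_mono)

lemma ipH_delta: "ipH m (delta m h) g = ipH m h (delta m g)"
  unfolding ipH_def delta_alt by (simp add: ac_simps)

lemma Mz'_adj_eq: "Mz'_adj m = (\<lambda>g. if g \<in> Hm m then SS (delta m g) else 0)"
  unfolding Mz'_adj_def
  by (rule adj_eqI) (auto simp: SS_Hn Hn_zero ipH_Mz Mz'_def ipH_delta delta_Hm intro: ipHn_ext)

end


context Hsp begin

lemma Mzi_Sadj: "Mzi i (Sadj i g) \<alpha> = complex_of_real (real (\<alpha> i) / real (m + mabs \<alpha> - 1)) * g \<alpha>"
proof (cases "\<alpha> i = 0")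
  case True then show ?thesis by (simp add: Mzi_def)
next
  case False
  let ?\<beta> = "\<alpha>(i := \<alpha> i - 1)"
  have u: "up i ?\<beta> = \<alpha>" using False by (auto simp: up_def fun_eq_iff)
  have mb: "mabs ?\<beta> = mabs \<alpha> - 1" using False mabs_dec[of \<alpha> i] by simp
  have ge: "mabs \<alpha> \<ge> 1" using mabs_ge[of \<alpha> i] False by simp
  have e: "m + mabs ?\<beta> = m + mabs \<alpha> - 1" using ge mb by simp
  have s: "Suc (?\<beta> i) = \<alpha> i" using False by simp
  show ?thesis using False unfolding Mzi_def Sadj_def u e
    by (simp only: s) (simp add: mult.commute)
qed

lemma Mz_SS: "Mz (SS g) \<alpha> = complex_of_real (real (mabs \<alpha>) / real (m + mabs \<alpha> - 1)) * g \<alpha>"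
proof -
  have "Mz (SS g) \<alpha> = (\<Sum>i\<in>UNIV. complex_of_real (real (\<alpha> i) / real (m + mabs \<alpha> - 1)) * g \<alpha>)"
    unfolding Mz_apply SS_def by (simp add: Mzi_Sadj)
  also have "\<dots> = complex_of_real ((\<Sum>i\<in>UNIV. real (\<alpha> i)) / real (m + mabs \<alpha> - 1)) * g \<alpha>"
    by (simp add: sum_distrib_right sum_divide_distrib)
  also have "(\<Sum>i\<in>UNIV. real (\<alpha> i)) = real (mabs \<alpha>)" unfolding mabs_def by simp
  finally show ?thesis .
qed

lemma dfac_mult: "mabs \<alpha> \<noteq> 0 \<Longrightarrow> dfac \<alpha> * (real (mabs \<alpha>) / real (m + mabs \<alpha> - 1)) = 1"
proof -
  assume a: "mabs \<alpha> \<noteq> 0"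
  have "real (m + mabs \<alpha> - 1) > 0" using m1 a by simp
  then show ?thesis unfolding dfac_def using a by simp
qed

lemma dMz_SS: "delta m (Mz (SS g)) = (\<lambda>\<alpha>. if mabs \<alpha> = 0 then 0 else g \<alpha>)"
proof
  fix \<alpha>
  show "delta m (Mz (SS g)) \<alpha> = (if mabs \<alpha> = 0 then 0 else g \<alpha>)"
  proof (cases "mabs \<alpha> = 0")
    case True then show ?thesis by (simp add: delta_alt Mz_SS)
  next
    case False
    have "delta m (Mz (SS g)) \<alpha> = complex_of_real (dfac \<alpha> * (real (mabs \<alpha>) / real (m + mabs \<alpha> - 1))) * g \<alpha>"
      unfolding delta_alt Mz_SS by (simp add: mult.assoc)
    also have "\<dots> = g \<alpha>" by (subst dfac_mult[OF False]) simp
    finally show ?thesis using False by simp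
  qed
qed

lemma Mz_SS_delta: "Mz (SS (delta m g)) = (\<lambda>\<alpha>. if mabs \<alpha> = 0 then 0 else g \<alpha>)"
proof
  fix \<alpha>
  show "Mz (SS (delta m g)) \<alpha> = (if mabs \<alpha> = 0 then 0 else g \<alpha>)"
  proof (cases "mabs \<alpha> = 0")
    case True then show ?thesis by (simp add: Mz_SS)
  next
    case False
    have "Mz (SS (delta m g)) \<alpha> = complex_of_real (dfac \<alpha> * (real (mabs \<alpha>) / real (m + mabs \<alpha> - 1))) * g \<alpha>"
      unfolding delta_alt Mz_SS by (simp add: ac_simps)
    also have "\<dots> = g \<alpha>" by (subst dfac_mult[OF False]) simp
    finally show ?thesis using False by simp
  qed
qed

definition nsqn :: "('n::finite \<Rightarrow> 'n coeffs) \<Rightarrow> real" where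
  "nsqn F = (\<Sum>i\<in>UNIV. nsq (F i))"

lemma ipHn_diff_left: "F \<in> Hn m \<Longrightarrow> G \<in> Hn m \<Longrightarrow> H \<in> Hn m \<Longrightarrow> ipHn m (F - G) H = ipHn m F H - ipHn m G H"
  unfolding ipHn_def Hn_iff by (simp add: ipH_diff_left sum_subtractf)

lemma ipHn_diff_right: "F \<in> Hn m \<Longrightarrow> G \<in> Hn m \<Longrightarrow> H \<in> Hn m \<Longrightarrow> ipHn m H (F - G) = ipHn m H F - ipHn m H G"
  unfolding ipHn_def Hn_iff by (simp add: ipH_diff_right sum_subtractf)

lemma ipHn_self: "F \<in> Hn m \<Longrightarrow> ipHn m F F = complex_of_real (nsqn F)"
  unfolding ipHn_def nsqn_def Hn_iff by (simp add: ipH_self)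

lemma nsqn_zero: assumes "F \<in> Hn m" "nsqn F = 0" shows "F = 0"
proof
  fix i
  have "\<forall>j\<in>UNIV. nsq (F j) = 0"
    using assms(2) unfolding nsqn_def by (subst sum_nonneg_eq_0_iff[symmetric]) (auto simp: nsq_nonneg)
  moreover have "F i \<in> Hm m" using assms(1) unfolding Hn_iff by simp
  ultimately show "F i = 0 i" using nsq_zero[of "F i"] by simp
qed

lemma ipHn_bound: assumes "F \<in> Hn m" "G \<in> Hn m" "s > 0"
  shows "cmod (ipHn m F G) \<le> (s * nsqn F + nsqn G / s) / 2"
proof -
  have "cmod (ipHn m F G) \<le> (\<Sum>i\<in>UNIV. cmod (ipH m (F i) (G i)))"
    unfolding ipHn_def by (rule norm_sum)
  also have "\<dots> \<le> (\<Sum>i\<in>UNIV. (s * nsq (F i) + nsq (G i) / s) / 2)"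
    by (rule sum_mono, rule ip_bound) (use assms in \<open>auto simp: Hn_iff\<close>)
  also have "\<dots> = ((\<Sum>i\<in>UNIV. s * nsq (F i)) + (\<Sum>i\<in>UNIV. nsq (G i) / s)) / 2"
    by (simp add: sum_divide_distrib[symmetric] sum.distrib)
  also have "\<dots> = (s * nsqn F + nsqn G / s) / 2"
    unfolding nsqn_def by (simp add: sum_distrib_left sum_divide_distrib)
  finally show ?thesis .
qed

lemma adj_prop: "F \<in> Hn m \<Longrightarrow> h \<in> Hm m \<Longrightarrow> ipHn m F (Mz_adj m h) = ipH m (Mz F) h"
  by (simp add: Mz_adj_eq ipH_Mz)

lemma small_zero: assumes "\<And>d. d > 0 \<Longrightarrow> cmod z \<le> d * C" "C \<ge> 0" shows "z = 0"
proof (rule ccontr)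
  assume "z \<noteq> 0"
  then have p: "cmod z > 0" by simp
  have "cmod z \<le> (cmod z / (2 * (C + 1))) * C" using assms(1)[of "cmod z / (2 * (C + 1))"] p assms(2) by simp
  also have "\<dots> < cmod z"
  proof -
    have "cmod z * C < cmod z * (2 * (C + 1))" using p assms(2) by (intro mult_strict_left_mono) auto
    then have "(cmod z * C) / (2 * (C + 1)) < cmod z" using assms(2) by (subst pos_divide_less_eq) auto
    then show ?thesis by simp
  qed
  finally show False by simp
qed

abbreviation VV where "VV \<equiv> hclosure (Hn m) (ipHn m) (Mz_adj m ` Hm m)"

lemma orth: assumes w: "w \<in> Hn m" and o: "\<And>h. h \<in> Hm m \<Longrightarrow> ipHn m w (Mz_adj m h) = 0"
  and v: "v \<in> VV" shows "ipHn m w v = 0"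
proof (rule small_zero[where C="(nsqn w + 1) / 2"])
  have "0 \<le> nsqn w" unfolding nsqn_def by (rule sum_nonneg) (rule nsq_nonneg)
  then show "0 \<le> (nsqn w + 1) / 2" by simp
  fix d :: real assume d: "d > 0"
  have vH: "v \<in> Hn m" using v unfolding hclosure_def by simp
  obtain v' where v': "v' \<in> Mz_adj m ` Hm m" and lt: "sqrt (Re (ipHn m (v - v') (v - v'))) < d"
    using v d unfolding hclosure_def by blast
  obtain h where h: "h \<in> Hm m" and vh: "v' = Mz_adj m h" using v' by blast
  have v'H: "v' \<in> Hn m" unfolding vh Mz_adj_eq using h by (simp add: SS_Hn)
  have dH: "v - v' \<in> Hn m" by (rule Hn_diff[OF vH v'H])
  have "sqrt (nsqn (v - v')) < d" using lt ipHn_self[OF dH] by simp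
  moreover have x0: "0 \<le> nsqn (v - v')" unfolding nsqn_def by (rule sum_nonneg) (rule nsq_nonneg)
  ultimately have "(sqrt (nsqn (v - v')))\<^sup>2 < d\<^sup>2" by (intro power_strict_mono) auto
  then have ns: "nsqn (v - v') < d\<^sup>2" using x0 by simp
  have e1: "ipHn m w (v - v') = ipHn m w v - ipHn m w v'" by (rule ipHn_diff_right[OF vH v'H w])
  have e2: "ipHn m w v' = 0" unfolding vh by (rule o[OF h])
  have eq: "ipHn m w v = ipHn m w (v - v')" by (simp only: e1 e2 diff_zero)
  have "cmod (ipHn m w (v - v')) \<le> (d * nsqn w + nsqn (v - v') / d) / 2"
    by (rule ipHn_bound[OF w dH d])
  also have "\<dots> \<le> (d * nsqn w + d\<^sup>2 / d) / 2"
    using ns d by (simp add: divide_right_mono)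
  also have "\<dots> = d * ((nsqn w + 1) / 2)" using d by (simp add: field_simps power2_eq_square)
  finally show "cmod (ipHn m w v) \<le> d * ((nsqn w + 1) / 2)" using eq by simp
qed

lemma P_eq: assumes G: "(G::'n::finite \<Rightarrow> 'n coeffs) \<in> Hn m" shows "P_ImMz_adj m G = SS (delta m (Mz G))"
proof -
  let ?y = "SS (delta m (Mz G))"
  have gh: "delta m (Mz G) \<in> Hm m" by (rule delta_Hm[OF Mz_Hm[OF G]])
  have yH: "?y \<in> Hn m" by (rule SS_Hn[OF gh])
  have yIm: "?y = Mz_adj m (delta m (Mz G))" unfolding Mz_adj_eq using gh by simp
  have yV: "?y \<in> VV"
    unfolding hclosure_def
  proof (intro CollectI conjI allI impI yH)
    fix e :: real assume "e > 0"
    moreover have "ipHn m (?y - ?y) (?y - ?y) = 0" unfolding ipHn_def by simp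
    ultimately show "\<exists>v\<in>Mz_adj m ` Hm m. sqrt (Re (ipHn m (?y - v) (?y - v))) < e"
      using yIm gh by (intro bexI[of _ ?y]) auto
  qed
  have mz0: "Mz (G - ?y) = 0"
  proof
    fix \<alpha>
    show "Mz (G - ?y) \<alpha> = 0 \<alpha>"
      unfolding Mz_diff using Mz_zero_deg[of \<alpha> G] by (simp add: Mz_SS_delta)
  qed
  have o: "ipHn m (G - ?y) v = 0" if "v \<in> VV" for v
  proof (rule orth[OF Hn_diff[OF G yH] _ that])
    fix h :: "'n coeffs" assume "h \<in> Hm m"
    then show "ipHn m (G - ?y) (Mz_adj m h) = 0"
      using adj_prop[OF Hn_diff[OF G yH]] mz0 by simp
  qed
  show ?thesis
    unfolding P_ImMz_adj_def orth_proj_def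
  proof (rule the_equality)
    show "?y \<in> VV \<and> (\<forall>v\<in>VV. ipHn m (G - ?y) v = 0)" using yV o by blast
  next
    fix y assume a: "y \<in> VV \<and> (\<forall>v\<in>VV. ipHn m (G - y) v = 0)"
    have yH': "y \<in> Hn m" using a unfolding hclosure_def by simp
    have d: "ipHn m (?y - y) v = 0" if "v \<in> VV" for v
    proof -
      have vH: "v \<in> Hn m" using that unfolding hclosure_def by simp
      have "(G - y) - (G - ?y) = ?y - y" by simp
      then have "ipHn m (?y - y) v = ipHn m (G - y) v - ipHn m (G - ?y) v"
        using ipHn_diff_left[OF Hn_diff[OF G yH'] Hn_diff[OF G yH] vH] by simp
      then show ?thesis using a o that by simp
    qed
    have "ipHn m (?y - y) (?y - y) = ipHn m (?y - y) ?y - ipHn m (?y - y) y"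
      by (rule ipHn_diff_right[OF yH yH' Hn_diff[OF yH yH']])
    also have "\<dots> = 0" using d[OF yV] d a by simp
    finally have "nsqn (?y - y) = 0" using ipHn_self[OF Hn_diff[OF yH yH']] by simp
    then have "?y - y = 0" by (rule nsqn_zero[OF Hn_diff[OF yH yH']])
    then show "y = ?y" by simp
  qed
qed

end


lemma finite_box: "finite {\<beta>::'n::finite \<Rightarrow> nat. \<forall>i. \<beta> i \<le> B i}"
proof -
  have "{\<beta>::'n \<Rightarrow> nat. \<forall>i. \<beta> i \<le> B i} = Pi\<^sub>E UNIV (\<lambda>i. {..B i})"
    by (auto simp: PiE_UNIV_domain Pi_def)
  then show ?thesis by (simp add: finite_PiE)
qed

lemma finite_le: "finite {\<beta>::'n::finite \<Rightarrow> nat. \<beta> \<le> \<alpha>}"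
  by (rule finite_subset[OF _ finite_box[of \<alpha>]]) (auto simp: le_fun_def)

lemma fmult_apply: "fmult a f \<alpha> = (\<Sum>\<beta>\<in>{\<beta>. \<beta> \<le> \<alpha>}. a \<beta> * f (\<alpha> - \<beta>))"
  unfolding fmult_def by simp

lemma fmult_scale: "fmult a (\<lambda>\<alpha>. c * f \<alpha>) = (\<lambda>\<alpha>. c * fmult a f \<alpha>)"
  unfolding fmult_def by (simp add: sum_distrib_left ac_simps)

lemma fmult_sum: "fmult a (\<Sum>i\<in>I. F i) = (\<Sum>i\<in>I. fmult a (F i))"
proof
  fix \<alpha>
  show "fmult a (\<Sum>i\<in>I. F i) \<alpha> = (\<Sum>i\<in>I. fmult a (F i)) \<alpha>"
    unfolding fmult_def sum_fun_apply by (simp add: sum_distrib_left sum.swap[of _ I])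
qed

lemma Mzi_scale: "Mzi i (\<lambda>\<alpha>. c * f \<alpha>) = (\<lambda>\<alpha>. c * Mzi i f \<alpha>)"
  unfolding Mzi_def by auto

lemma Mzi_sum: "Mzi i (\<Sum>j\<in>J. F j) = (\<Sum>j\<in>J. Mzi i (F j))"
  unfolding Mzi_def by (auto simp: fun_eq_iff sum_fun_apply)

lemma Mzi_fmult: "Mzi (i::'n::finite) (fmult a u) = fmult a (Mzi i u)"
proof
  fix \<alpha> :: "'n mindex"
  show "Mzi i (fmult a u) \<alpha> = fmult a (Mzi i u) \<alpha>"
  proof (cases "\<alpha> i = 0")
    case True
    have z: "a \<beta> * Mzi i u (\<alpha> - \<beta>) = 0" if "\<beta> \<in> {\<beta>. \<beta> \<le> \<alpha>}" for \<beta>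
    proof -
      have "\<beta> i \<le> \<alpha> i" using that unfolding le_fun_def by simp
      then have "(\<alpha> - \<beta>) i = 0" using True by simp
      then show ?thesis unfolding Mzi_def by simp
    qed
    have "Mzi i (fmult a u) \<alpha> = 0" using True unfolding Mzi_def by simp
    moreover have "fmult a (Mzi i u) \<alpha> = 0" unfolding fmult_apply by (intro sum.neutral ballI z)
    ultimately show ?thesis by simp
  next
    case False
    let ?a = "\<alpha>(i := \<alpha> i - 1)"
    have sub: "{\<beta>. \<beta> \<le> ?a} \<subseteq> {\<beta>. \<beta> \<le> \<alpha>}"
    proof
      fix \<beta> assume "\<beta> \<in> {\<beta>. \<beta> \<le> ?a}"
      then have h: "\<And>j. \<beta> j \<le> ?a j" unfolding le_fun_def by simp
      have "\<beta> j \<le> \<alpha> j" for j using h[of j] by (cases "j = i") auto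
      then show "\<beta> \<in> {\<beta>. \<beta> \<le> \<alpha>}" unfolding le_fun_def by simp
    qed
    have "fmult a (Mzi i u) \<alpha> = (\<Sum>\<beta>\<in>{\<beta>. \<beta> \<le> ?a}. a \<beta> * Mzi i u (\<alpha> - \<beta>))"
      unfolding fmult_apply
    proof (rule sum.mono_neutral_right[OF finite_le sub])
      show "\<forall>\<beta>\<in>{\<beta>. \<beta> \<le> \<alpha>} - {\<beta>. \<beta> \<le> ?a}. a \<beta> * Mzi i u (\<alpha> - \<beta>) = 0"
      proof
        fix \<beta> assume b: "\<beta> \<in> {\<beta>. \<beta> \<le> \<alpha>} - {\<beta>. \<beta> \<le> ?a}"
        then have ba: "\<And>j. \<beta> j \<le> \<alpha> j" unfolding le_fun_def by simp
        have "\<beta> i \<ge> \<alpha> i"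
        proof (rule ccontr)
          assume "\<not> \<beta> i \<ge> \<alpha> i"
          then have "\<beta> j \<le> ?a j" for j using ba[of j] by (cases "j = i") auto
          then have "\<beta> \<le> ?a" unfolding le_fun_def by simp
          then show False using b by simp
        qed
        then have "(\<alpha> - \<beta>) i = 0" by simp
        then show "a \<beta> * Mzi i u (\<alpha> - \<beta>) = 0" unfolding Mzi_def by simp
      qed
    qed
    also have "\<dots> = (\<Sum>\<beta>\<in>{\<beta>. \<beta> \<le> ?a}. a \<beta> * u (?a - \<beta>))"
    proof (rule sum.cong[OF refl])
      fix \<beta> assume "\<beta> \<in> {\<beta>. \<beta> \<le> ?a}"
      then have "\<forall>x. \<beta> x \<le> ?a x" unfolding le_fun_def by simp
      then have "\<beta> i \<le> ?a i" by (rule spec)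
      then have bi: "\<beta> i < \<alpha> i" using False by simp
      have e: "(\<alpha> - \<beta>)(i := (\<alpha> - \<beta>) i - 1) = ?a - \<beta>"
      proof
        fix j show "((\<alpha> - \<beta>)(i := (\<alpha> - \<beta>) i - 1)) j = (?a - \<beta>) j" by (cases "j = i") auto
      qed
      have "(\<alpha> - \<beta>) i \<noteq> 0" using bi by simp
      then have "Mzi i u (\<alpha> - \<beta>) = u (?a - \<beta>)" unfolding Mzi_def e by simp
      then show "a \<beta> * Mzi i u (\<alpha> - \<beta>) = a \<beta> * u (?a - \<beta>)" by simp
    qed
    also have "\<dots> = Mzi i (fmult a u) \<alpha>" using False unfolding Mzi_def fmult_apply by simp
    finally show ?thesis by simp
  qed
qed

context Hsp begin

lemma Sadj_Hhom: assumes "h \<in> Hhom m d" shows "Sadj i h \<in> Hhom m (d - 1)"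
proof -
  have hm: "h \<in> Hm m" using assms unfolding Hhom_def by simp
  have "Sadj i h \<beta> = 0" if "mabs \<beta> \<noteq> d - 1" for \<beta>
  proof -
    have "mabs (up i \<beta>) \<noteq> d" using that by (auto simp: up_def mabs_upd)
    then have "h (up i \<beta>) = 0" using assms unfolding Hhom_def by simp
    then show ?thesis by (simp add: Sadj_def)
  qed
  then show ?thesis unfolding Hhom_def using Sadj_Hm[OF hm] by simp
qed

lemma sumMzi_Sadj: "(\<Sum>i\<in>UNIV. Mzi i (Sadj i h)) = Mz (SS h)"
  unfolding Mz_def SS_def ..

lemma Mz_SS_hom: assumes "h \<in> Hhom m d"
  shows "Mz (SS h) = (\<lambda>\<alpha>. complex_of_real (real d / real (m + d - 1)) * h \<alpha>)"
proof
  fix \<alpha>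
  show "Mz (SS h) \<alpha> = complex_of_real (real d / real (m + d - 1)) * h \<alpha>"
  proof (cases "mabs \<alpha> = d")
    case True then show ?thesis by (simp add: Mz_SS)
  next
    case False
    then have "h \<alpha> = 0" using assms unfolding Hhom_def by simp
    then show ?thesis by (simp add: Mz_SS)
  qed
qed

end


definition cc :: "nat \<Rightarrow> nat \<Rightarrow> complex" where
  "cc m j = complex_of_int ((-1) ^ j * int (m choose (j + 1)))"

locale Tsp = Hsp m for m +
  fixes r :: nat and T :: "'n::finite coeffs \<Rightarrow> 'n coeffs"
  assumes bT: "bounded_op m T"
    and hom: "\<forall>j. \<forall>f\<in>Hhom m j. T f \<in> Hhom m (j + r)"
    and hyp: "\<forall>F\<in>Hn m. Mz'_adj m (T (Mz' m F)) =
           P_ImMz_adj m (oplus_op (\<lambda>f. \<Sum>j<m. (\<lambda>\<alpha>. complex_of_int ((-1) ^ j * int (m choose (j + 1)))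
                                      * (sigma m ^^ j) T f \<alpha>)) (P_ImMz_adj m F))"
begin

definition Xop :: "'n coeffs \<Rightarrow> 'n coeffs" where
  "Xop f = (\<Sum>j<m. (\<lambda>\<alpha>. cc m j * (sigma m ^^ j) T f \<alpha>))"

lemma T_Hm: "f \<in> Hm m \<Longrightarrow> T f \<in> Hm m"
  using bT unfolding bounded_op_def by blast

lemma T_add: "f \<in> Hm m \<Longrightarrow> g \<in> Hm m \<Longrightarrow> T (f + g) = T f + T g"
  using bT unfolding bounded_op_def by blast

lemma T_scale: "f \<in> Hm m \<Longrightarrow> T (\<lambda>\<alpha>. c * f \<alpha>) = (\<lambda>\<alpha>. c * T f \<alpha>)"
  using bT unfolding bounded_op_def by blast

lemma T_zero: "T 0 = 0"
proof -
  have "T (\<lambda>\<alpha>. 0 * (0::'n coeffs) \<alpha>) = (\<lambda>\<alpha>. 0 * T 0 \<alpha>)" by (rule T_scale[OF Hm_zero(1)])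
  then show ?thesis by (simp add: zero_fun_def)
qed

lemma T_zero': "T (\<lambda>_. 0) = (\<lambda>_. 0)"
  using T_zero by (simp add: zero_fun_def)

lemma T_sum: "(\<And>i. i \<in> I \<Longrightarrow> F i \<in> Hm m) \<Longrightarrow> T (\<Sum>i\<in>I. F i) = (\<Sum>i\<in>I. T (F i))"
proof (induction I rule: infinite_finite_induct)
  case (infinite A) then show ?case by (simp add: T_zero T_zero')
next
  case empty then show ?case by (simp add: T_zero T_zero')
next
  case (insert x I)
  have e: "(\<Sum>i\<in>insert x I. F i) = F x + (\<Sum>i\<in>I. F i)" by (simp only: sum.insert[OF insert(1,2)])
  have "T (F x + (\<Sum>i\<in>I. F i)) = T (F x) + T (\<Sum>i\<in>I. F i)"
    by (rule T_add) (use insert in \<open>auto intro: Hm_sum\<close>)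
  then show ?case using insert by (simp only: e sum.insert[OF insert(1,2)]) simp
qed

lemma T_diff: "f \<in> Hm m \<Longrightarrow> g \<in> Hm m \<Longrightarrow> T (f - g) = T f - T g"
proof -
  assume f: "f \<in> Hm m" and g: "g \<in> Hm m"
  have "T ((f - g) + g) = T (f - g) + T g" by (rule T_add[OF Hm_diff[OF f g] g])
  then show ?thesis by simp
qed

lemma sigma_apply: "f \<in> Hm m \<Longrightarrow> sigma m X f = (\<Sum>i\<in>UNIV. Mzi i (X (Sadj i f)))"
  unfolding sigma_def Mzi_adj_eq by simp

lemma sig_pres: "f \<in> Hm m \<Longrightarrow> (sigma m ^^ j) T f \<in> Hm m"
proof (induction j arbitrary: f)
  case 0 then show ?case by (simp add: T_Hm)
next
  case (Suc j)
  show ?case using Suc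
    by (simp add: sigma_apply) (auto intro!: Hm_sum Mzi_Hm Suc.IH Sadj_Hm)
qed

lemma Xop_Hm: "f \<in> Hm m \<Longrightarrow> Xop f \<in> Hm m"
  unfolding Xop_def by (auto intro!: Hm_sum Hm_scale sig_pres)

lemma key: assumes g: "g \<in> Hhom m (Suc k)" shows "T g = Mz (\<lambda>i. Xop (Sadj i g))"
proof -
  have gm: "g \<in> Hm m" using g unfolding Hhom_def by simp
  have g0: "g \<alpha> = 0" if "mabs \<alpha> = 0" for \<alpha> using g that unfolding Hhom_def by simp
  have geq: "(\<lambda>\<alpha>. if mabs \<alpha> = 0 then 0 else g \<alpha>) = g" using g0 by auto
  let ?F = "SS g"
  have FH: "?F \<in> Hn m" by (rule SS_Hn[OF gm])
  have M': "Mz' m ?F = g" unfolding Mz'_def dMz_SS geq ..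
  have PF: "P_ImMz_adj m ?F = ?F" unfolding P_eq[OF FH] dMz_SS geq ..
  let ?G = "\<lambda>i. Xop (Sadj i g)"
  have GH: "?G \<in> Hn m" unfolding Hn_iff by (auto intro: Xop_Hm Sadj_Hm gm)
  have op: "oplus_op (\<lambda>f. \<Sum>j<m. (\<lambda>\<alpha>. complex_of_int ((-1) ^ j * int (m choose (j + 1)))
                                      * (sigma m ^^ j) T f \<alpha>)) ?F = ?G"
    unfolding oplus_op_def SS_def Xop_def cc_def ..
  have h: "Mz'_adj m (T (Mz' m ?F)) = P_ImMz_adj m (oplus_op (\<lambda>f. \<Sum>j<m. (\<lambda>\<alpha>. complex_of_int ((-1) ^ j * int (m choose (j + 1)))
                                      * (sigma m ^^ j) T f \<alpha>)) (P_ImMz_adj m ?F))"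
    using hyp FH by blast
  have "Mz'_adj m (T g) = SS (delta m (Mz ?G))"
    using h by (simp only: M' PF op P_eq[OF GH])
  then have eq: "SS (delta m (T g)) = SS (delta m (Mz ?G))"
    unfolding Mz'_adj_eq using T_Hm[OF gm] by simp
  show ?thesis
  proof
    fix \<alpha>
    show "T g \<alpha> = Mz ?G \<alpha>"
    proof (cases "mabs \<alpha> = 0")
      case True
      have "T g \<in> Hhom m (Suc k + r)" using hom g by blast
      then have "T g \<alpha> = 0" using True unfolding Hhom_def by simp
      then show ?thesis using Mz_zero_deg[OF True] by simp
    next
      case False
      have "Mz (SS (delta m (T g))) \<alpha> = Mz (SS (delta m (Mz ?G))) \<alpha>" using eq by simp
      then show ?thesis using False unfolding Mz_SS_delta by simp
    qed
  qed
qed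

end


lemma cc_real: "cc m j = complex_of_real ((-1) ^ j * real (m choose (j + 1)))"
  unfolding cc_def by simp

context Tsp begin

definition phi :: "'n coeffs" where "phi = T one_fun"

abbreviation z0 :: "'n mindex" where "z0 \<equiv> (\<lambda>_. 0)"

lemma Q0: assumes h: "h \<in> Hhom m 0" shows "T h = fmult phi h"
proof -
  have hm: "h \<in> Hm m" using h unfolding Hhom_def by simp
  have hz: "h \<alpha> = 0" if "\<alpha> \<noteq> z0" for \<alpha>
    using h that unfolding Hhom_def by (simp add: mabs_zero_iff)
  have he: "h = (\<lambda>\<alpha>. h z0 * one_fun \<alpha>)"
  proof
    fix \<alpha> show "h \<alpha> = h z0 * one_fun \<alpha>" using hz[of \<alpha>] by (cases "\<alpha> = z0") (auto simp: one_fun_def)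
  qed
  have om: "(one_fun::'n coeffs) \<in> Hm m"
  proof -
    have e: "(one_fun::'n coeffs) = ind z0" unfolding one_fun_def ind_def by simp
    show ?thesis unfolding e by (rule ind_Hm)
  qed
  have "T h = (\<lambda>\<alpha>. h z0 * phi \<alpha>)" unfolding phi_def by (subst he) (rule T_scale[OF om])
  moreover have "fmult phi h = (\<lambda>\<alpha>. h z0 * phi \<alpha>)"
  proof
    fix \<alpha> :: "'n mindex"
    have sub: "{\<alpha>} \<subseteq> {\<beta>. \<beta> \<le> \<alpha>}" by simp
    have "fmult phi h \<alpha> = (\<Sum>\<beta>\<in>{\<alpha>}. phi \<beta> * h (\<alpha> - \<beta>))"
      unfolding fmult_apply
    proof (rule sum.mono_neutral_right[OF finite_le sub])
      show "\<forall>\<beta>\<in>{\<beta>. \<beta> \<le> \<alpha>} - {\<alpha>}. phi \<beta> * h (\<alpha> - \<beta>) = 0"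
      proof
        fix \<beta> assume b: "\<beta> \<in> {\<beta>. \<beta> \<le> \<alpha>} - {\<alpha>}"
        have "\<alpha> - \<beta> \<noteq> z0"
        proof
          assume a: "\<alpha> - \<beta> = z0"
          have "\<beta> j = \<alpha> j" for j
          proof -
            have "\<alpha> j - \<beta> j = 0" using fun_cong[OF a, of j] by simp
            moreover have "\<beta> j \<le> \<alpha> j" using b unfolding le_fun_def by simp
            ultimately show ?thesis by simp
          qed
          then have "\<beta> = \<alpha>" by (simp add: fun_eq_iff)
          then show False using b by simp
        qed
        then show "phi \<beta> * h (\<alpha> - \<beta>) = 0" using hz by simp
      qed
    qed
    also have "\<dots> = h z0 * phi \<alpha>" by (simp add: zero_fun_def)
    finally show "fmult phi h \<alpha> = h z0 * phi \<alpha>" .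
  qed
  ultimately show ?thesis by simp
qed

lemma sig: assumes Q: "\<forall>d\<le>k. \<forall>h\<in>Hhom m d. T h = fmult phi h"
  shows "h \<in> Hhom m d \<Longrightarrow> d \<le> k + j \<Longrightarrow> (sigma m ^^ j) T h = (\<lambda>\<alpha>. complex_of_real (lam m j d) * fmult phi h \<alpha>)"
proof (induction j arbitrary: d h)
  case 0 then show ?case using Q by simp
next
  case (Suc j)
  have hm: "h \<in> Hm m" using Suc.prems unfolding Hhom_def by simp
  let ?c = "complex_of_real (lam m j (d - 1))"
  have IH: "(sigma m ^^ j) T (Sadj i h) = (\<lambda>\<alpha>. ?c * fmult phi (Sadj i h) \<alpha>)" for i
    by (rule Suc.IH) (use Suc.prems Sadj_Hhom in auto)
  show ?case
  proof
    fix \<alpha>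
    have "(sigma m ^^ Suc j) T h \<alpha> = (\<Sum>i\<in>UNIV. Mzi i ((sigma m ^^ j) T (Sadj i h)) \<alpha>)"
      using hm by (simp add: sigma_apply sum_fun_apply)
    also have "\<dots> = (\<Sum>i\<in>UNIV. ?c * fmult phi (Mzi i (Sadj i h)) \<alpha>)"
      by (rule sum.cong[OF refl]) (simp only: IH Mzi_scale Mzi_fmult)
    also have "\<dots> = ?c * fmult phi (\<Sum>i\<in>UNIV. Mzi i (Sadj i h)) \<alpha>"
      by (simp add: fmult_sum sum_fun_apply sum_distrib_left)
    also have "(\<Sum>i\<in>UNIV. Mzi i (Sadj i h)) = (\<lambda>\<alpha>. complex_of_real (real d / real (m + d - 1)) * h \<alpha>)"
      unfolding sumMzi_Sadj by (rule Mz_SS_hom[OF Suc.prems(1)])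
    also have "?c * fmult phi (\<lambda>\<alpha>. complex_of_real (real d / real (m + d - 1)) * h \<alpha>) \<alpha>
       = complex_of_real (lam m (Suc j) d) * fmult phi h \<alpha>"
      unfolding fmult_scale by simp
    finally show "(sigma m ^^ Suc j) T h \<alpha> = complex_of_real (lam m (Suc j) d) * fmult phi h \<alpha>" .
  qed
qed

lemma Qstep: assumes Q: "\<forall>d\<le>k. \<forall>h\<in>Hhom m d. T h = fmult phi h" and h: "h \<in> Hhom m (Suc k)"
  shows "T h = fmult phi h"
proof -
  define K where "K = (\<Sum>j<m. cc m j * complex_of_real (lam m j k))"
  have Sh: "Sadj i h \<in> Hhom m k" for i using Sadj_Hhom[OF h, of i] by simp
  have X: "Xop (Sadj i h) = (\<lambda>\<alpha>. K * fmult phi (Sadj i h) \<alpha>)" for i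
  proof
    fix \<alpha>
    have "Xop (Sadj i h) \<alpha> = (\<Sum>j<m. cc m j * (complex_of_real (lam m j k) * fmult phi (Sadj i h) \<alpha>))"
      unfolding Xop_def sum_fun_apply using sig[OF Q Sh] by simp
    then show "Xop (Sadj i h) \<alpha> = K * fmult phi (Sadj i h) \<alpha>"
      unfolding K_def by (simp add: sum_distrib_right mult.assoc)
  qed
  have K1: "K * complex_of_real (real (Suc k) / real (m + Suc k - 1)) = 1"
  proof -
    have "K * complex_of_real (real (Suc k) / real (m + Suc k - 1))
        = complex_of_real (\<Sum>j<m. (-1::real)^j * real (m choose (j+1)) * lam m (Suc j) (Suc k))"
      unfolding K_def cc_real sum_distrib_right of_real_sum
      by (rule sum.cong[OF refl]) simp
    also have "\<dots> = 1" using lam_sum1[OF m1, of "Suc k"] by simp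
    finally show ?thesis .
  qed
  show ?thesis
  proof
    fix \<alpha>
    have "T h \<alpha> = (\<Sum>i\<in>UNIV. Mzi i (Xop (Sadj i h)) \<alpha>)" unfolding key[OF h] Mz_apply ..
    also have "\<dots> = (\<Sum>i\<in>UNIV. K * fmult phi (Mzi i (Sadj i h)) \<alpha>)"
      by (rule sum.cong[OF refl]) (simp only: X Mzi_scale Mzi_fmult)
    also have "\<dots> = K * fmult phi (\<Sum>i\<in>UNIV. Mzi i (Sadj i h)) \<alpha>"
      by (simp add: fmult_sum sum_fun_apply sum_distrib_left)
    also have "(\<Sum>i\<in>UNIV. Mzi i (Sadj i h)) = (\<lambda>\<alpha>. complex_of_real (real (Suc k) / real (m + Suc k - 1)) * h \<alpha>)"
      unfolding sumMzi_Sadj by (rule Mz_SS_hom[OF h])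
    also have "K * fmult phi (\<lambda>\<alpha>. complex_of_real (real (Suc k) / real (m + Suc k - 1)) * h \<alpha>) \<alpha> = fmult phi h \<alpha>"
      unfolding fmult_scale mult.assoc[symmetric] K1 by simp
    finally show "T h \<alpha> = fmult phi h \<alpha>" .
  qed
qed

lemma Qall: "\<forall>d\<le>k. \<forall>h\<in>Hhom m d. T h = fmult phi h"
proof (induction k)
  case 0 then show ?case using Q0 by simp
next
  case (Suc k)
  show ?case
  proof (intro allI impI ballI)
    fix d and h :: "'n coeffs" assume d: "d \<le> Suc k" and h: "h \<in> Hhom m d"
    show "T h = fmult phi h"
    proof (cases "d = Suc k")
      case True then show ?thesis using Qstep[OF Suc.IH] h by simp
    next
      case False
      then have "d \<le> k" using d by simp
      then show ?thesis using Suc.IH h by blast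
    qed
  qed
qed

end


context Hsp begin

lemma finite_mabs_le: "finite {\<beta>::'n::finite mindex. mabs \<beta> \<le> N}"
proof (rule finite_subset[OF _ finite_box[of "\<lambda>_. N"]])
  show "{\<beta>::'n mindex. mabs \<beta> \<le> N} \<subseteq> {\<beta>. \<forall>i. \<beta> i \<le> N}"
  proof
    fix \<beta> :: "'n mindex" assume "\<beta> \<in> {\<beta>. mabs \<beta> \<le> N}"
    then have "mabs \<beta> \<le> N" by simp
    then have "\<beta> i \<le> N" for i using mabs_ge[of \<beta> i] by linarith
    then show "\<beta> \<in> {\<beta>. \<forall>i. \<beta> i \<le> N}" by simp
  qed
qed

lemma tail: assumes f: "f \<in> Hm m" and e: "e > 0"
  shows "\<exists>N. nsq (\<lambda>\<beta>::'n::finite mindex. if mabs \<beta> \<le> N then 0 else f \<beta>) < e"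
proof -
  let ?g = "\<lambda>\<beta>. (cmod (f \<beta>))\<^sup>2 / rho m \<beta>"
  have gs: "?g summable_on UNIV" by (rule nsq_summable[OF f])
  have "(?g has_sum nsq f) UNIV" unfolding nsq_def by (rule has_sum_infsum[OF gs])
  then have "(sum ?g \<longlongrightarrow> nsq f) (finite_subsets_at_top UNIV)" unfolding has_sum_def .
  then have "eventually (\<lambda>Y. dist (sum ?g Y) (nsq f) < e) (finite_subsets_at_top UNIV)"
    using e by (rule tendstoD)
  then have "\<exists>X. finite X \<and> X \<subseteq> UNIV \<and> (\<forall>Y. finite Y \<and> X \<subseteq> Y \<and> Y \<subseteq> UNIV \<longrightarrow> dist (sum ?g Y) (nsq f) < e)"
    by (simp only: eventually_finite_subsets_at_top)
  then obtain X where X: "finite X" and XP0: "\<forall>Y. finite Y \<and> X \<subseteq> Y \<and> Y \<subseteq> UNIV \<longrightarrow> dist (sum ?g Y) (nsq f) < e"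
    by (elim exE conjE)
  have XP: "dist (sum ?g Y) (nsq f) < e" if "finite Y" "X \<subseteq> Y" for Y using XP0 that by simp
  define N where "N = (\<Sum>\<beta>\<in>X. mabs \<beta>)"
  define Y where "Y = {\<beta>::'n mindex. mabs \<beta> \<le> N}"
  have Yf: "finite Y" unfolding Y_def by (rule finite_mabs_le)
  have XY: "X \<subseteq> Y"
  proof
    fix \<beta> assume b: "\<beta> \<in> X"
    have "mabs \<beta> \<le> N" unfolding N_def by (rule member_le_sum[OF b _ X]) simp
    then show "\<beta> \<in> Y" unfolding Y_def by simp
  qed
  have d: "dist (sum ?g Y) (nsq f) < e" by (rule XP[OF Yf XY])
  have "nsq (\<lambda>\<beta>. if mabs \<beta> \<le> N then 0 else f \<beta>) = infsum ?g (UNIV - Y)"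
    unfolding nsq_def by (rule infsum_cong_neutral) (auto simp: Y_def)
  also have "\<dots> = infsum ?g UNIV - infsum ?g Y"
    by (rule infsum_Diff[OF gs]) (use Yf in auto)
  also have "\<dots> = nsq f - sum ?g Y" unfolding nsq_def using Yf by simp
  also have "\<dots> < e" using d by (simp add: dist_real_def)
  finally show ?thesis by blast
qed

end

context Tsp begin

definition hompart :: "nat \<Rightarrow> 'n coeffs \<Rightarrow> 'n coeffs" where
  "hompart d f = (\<lambda>\<beta>. if mabs \<beta> = d then f \<beta> else 0)"

lemma hompart_hom: "f \<in> Hm m \<Longrightarrow> hompart d f \<in> Hhom m d"
  unfolding Hhom_def hompart_def by (auto intro: Hm_dom[where B=1])

lemma trunc_sum: "(\<lambda>\<beta>. if mabs \<beta> \<le> N then f \<beta> else 0) = (\<Sum>d\<in>{..N}. hompart d f)"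
proof
  fix \<beta>
  have "(\<Sum>d\<in>{..N}. hompart d f) \<beta> = (\<Sum>d\<in>{..N}. if mabs \<beta> = d then f \<beta> else 0)"
    unfolding sum_fun_apply hompart_def ..
  also have "\<dots> = (if mabs \<beta> \<le> N then f \<beta> else 0)" by (simp add: sum.delta)
  finally show "(if mabs \<beta> \<le> N then f \<beta> else 0) = (\<Sum>d\<in>{..N}. hompart d f) \<beta>" by simp
qed

lemma Tbound: obtains C where "\<And>u. u \<in> Hm m \<Longrightarrow> nsq (T u) \<le> C * nsq u" "C \<ge> 0"
proof -
  obtain C where C: "\<And>u. u \<in> Hm m \<Longrightarrow> normH m (T u) \<le> C * normH m u"
    using bT unfolding bounded_op_def by blast
  have nh: "normH m u = sqrt (nsq u)" for u unfolding normH_def nsq_def ..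
  have "nsq (T u) \<le> C\<^sup>2 * nsq u" if u: "u \<in> Hm m" for u
  proof -
    have a: "sqrt (nsq (T u)) \<le> C * sqrt (nsq u)" using C[OF u] unfolding nh .
    have "0 \<le> sqrt (nsq (T u))" using nsq_nonneg[of "T u"] by simp
    then have "(sqrt (nsq (T u)))\<^sup>2 \<le> (C * sqrt (nsq u))\<^sup>2" using a by (intro power_mono) auto
    then show ?thesis using nsq_nonneg[of "T u"] nsq_nonneg[of u] by (simp add: power_mult_distrib)
  qed
  then show ?thesis using that[of "C\<^sup>2"] by simp
qed

lemma vanish: assumes f: "f \<in> Hm m" and z: "\<And>\<beta>. mabs \<beta> + r = mabs \<alpha> \<Longrightarrow> f \<beta> = 0"
  shows "T f \<alpha> = 0"
proof -
  obtain C where C: "\<And>u. u \<in> Hm m \<Longrightarrow> nsq (T u) \<le> C * nsq u" and C0: "C \<ge> 0" by (rule Tbound) blast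
  have trunc0: "T (\<lambda>\<beta>. if mabs \<beta> \<le> N then f \<beta> else 0) \<alpha> = 0" for N
  proof -
    have "T (\<lambda>\<beta>. if mabs \<beta> \<le> N then f \<beta> else 0) = (\<Sum>d\<in>{..N}. T (hompart d f))"
      unfolding trunc_sum by (rule T_sum) (use hompart_hom[OF f] in \<open>auto simp: Hhom_def\<close>)
    moreover have "T (hompart d f) \<alpha> = 0" for d
    proof (cases "d + r = mabs \<alpha>")
      case True
      have "hompart d f = 0" unfolding hompart_def using z True by (auto simp: fun_eq_iff)
      then show ?thesis by (simp add: T_zero)
    next
      case False
      have "T (hompart d f) \<in> Hhom m (d + r)" using hom hompart_hom[OF f] by blast
      then show ?thesis using False unfolding Hhom_def by auto
    qed
    ultimately show ?thesis by (simp add: sum_fun_apply)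
  qed
  have "(cmod (T f \<alpha>))\<^sup>2 \<le> rho m \<alpha> * (C + 1) * e" if e: "e > 0" for e
  proof -
    obtain N where N: "nsq (\<lambda>\<beta>. if mabs \<beta> \<le> N then 0 else f \<beta>) < e" using tail[OF f e] by blast
    let ?t = "\<lambda>\<beta>. if mabs \<beta> \<le> N then f \<beta> else 0"
    have tH: "?t \<in> Hm m" by (rule Hm_dom[OF f, where B=1]) auto
    have dH: "f - ?t \<in> Hm m" by (rule Hm_diff[OF f tH])
    have ft: "f - ?t = (\<lambda>\<beta>. if mabs \<beta> \<le> N then 0 else f \<beta>)" by (auto simp: fun_eq_iff)
    have "T (f - ?t) = T f - T ?t" by (rule T_diff[OF f tH])
    then have eq: "T f \<alpha> = T (f - ?t) \<alpha>" using trunc0[of N] by (simp add: fun_eq_iff)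
    have "(cmod (T f \<alpha>))\<^sup>2 / rho m \<alpha> \<le> nsq (T (f - ?t))" unfolding eq by (rule coef_bound[OF T_Hm[OF dH]])
    also have "\<dots> \<le> C * nsq (f - ?t)" by (rule C[OF dH])
    also have "\<dots> \<le> (C + 1) * e" unfolding ft using N C0 nsq_nonneg
      by (intro mult_mono) (auto intro: less_imp_le)
    finally show ?thesis using rho_pos[of \<alpha>] by (simp add: divide_le_eq mult.commute mult.left_commute)
  qed
  then have "(cmod (T f \<alpha>))\<^sup>2 = 0"
  proof -
    assume H: "\<And>e. e > 0 \<Longrightarrow> (cmod (T f \<alpha>))\<^sup>2 \<le> rho m \<alpha> * (C + 1) * e"
    have pos: "rho m \<alpha> * (C + 1) > 0" using rho_pos[of \<alpha>] C0 by simp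
    show ?thesis
    proof (rule ccontr)
      assume ne: "(cmod (T f \<alpha>))\<^sup>2 \<noteq> 0"
      then have p: "(cmod (T f \<alpha>))\<^sup>2 > 0" by simp
      have "(cmod (T f \<alpha>))\<^sup>2 \<le> rho m \<alpha> * (C + 1) * ((cmod (T f \<alpha>))\<^sup>2 / (2 * (rho m \<alpha> * (C + 1))))"
        using H[of "(cmod (T f \<alpha>))\<^sup>2 / (2 * (rho m \<alpha> * (C + 1)))"] p pos by simp
      also have "\<dots> = (cmod (T f \<alpha>))\<^sup>2 / 2" using pos by (simp add: field_simps)
      finally show False using p by simp
    qed
  qed
  then show ?thesis by simp
qed

end


lemma mabs_mono: "(\<beta>::'n::finite mindex) \<le> \<alpha> \<Longrightarrow> mabs \<beta> \<le> mabs \<alpha>"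
  unfolding mabs_def le_fun_def by (rule sum_mono) simp

lemma mabs_diff: "(\<beta>::'n::finite mindex) \<le> \<alpha> \<Longrightarrow> mabs (\<alpha> - \<beta>) = mabs \<alpha> - mabs \<beta>"
proof -
  assume b: "\<beta> \<le> \<alpha>"
  have "mabs (\<alpha> - \<beta>) + mabs \<beta> = (\<Sum>i\<in>UNIV. (\<alpha> i - \<beta> i) + \<beta> i)"
    unfolding mabs_def by (simp add: sum.distrib)
  also have "\<dots> = mabs \<alpha>" unfolding mabs_def
    by (rule sum.cong[OF refl]) (use b in \<open>simp add: le_fun_def\<close>)
  finally show ?thesis by simp
qed

context Tsp begin

lemma phi_hom: "phi \<in> Hhom m r"
proof -
  have e: "(one_fun::'n coeffs) = ind z0" unfolding one_fun_def ind_def by simp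
  have "(one_fun::'n coeffs) \<in> Hhom m 0" unfolding Hhom_def e using ind_Hm[of z0]
    by (auto simp: ind_def mabs_zero_iff)
  then show ?thesis unfolding phi_def using hom by fastforce
qed

lemma main: assumes f: "f \<in> Hm m" shows "T f = fmult phi f"
proof
  fix \<alpha>
  have phz: "phi \<beta> = 0" if "mabs \<beta> \<noteq> r" for \<beta> using phi_hom that unfolding Hhom_def by simp
  show "T f \<alpha> = fmult phi f \<alpha>"
  proof (cases "mabs \<alpha> < r")
    case True
    have "T f \<alpha> = 0" by (rule vanish[OF f]) (use True in simp)
    moreover have "fmult phi f \<alpha> = 0" unfolding fmult_apply
    proof (intro sum.neutral ballI)
      fix \<beta> assume "\<beta> \<in> {\<beta>. \<beta> \<le> \<alpha>}"
      then have "mabs \<beta> \<le> mabs \<alpha>" by (simp add: mabs_mono)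
      then show "phi \<beta> * f (\<alpha> - \<beta>) = 0" using phz True by simp
    qed
    ultimately show ?thesis by simp
  next
    case False
    define k where "k = mabs \<alpha> - r"
    have hk: "hompart k f \<in> Hhom m k" by (rule hompart_hom[OF f])
    have hkm: "hompart k f \<in> Hm m" using hk unfolding Hhom_def by simp
    have "T f = T (hompart k f) + T (f - hompart k f)"
      using T_add[OF hkm Hm_diff[OF f hkm]] by simp
    moreover have "T (f - hompart k f) \<alpha> = 0"
      by (rule vanish[OF Hm_diff[OF f hkm]]) (auto simp: hompart_def k_def)
    moreover have "T (hompart k f) = fmult phi (hompart k f)" using Qall[of k] hk by blast
    moreover have "fmult phi (hompart k f) \<alpha> = fmult phi f \<alpha>" unfolding fmult_apply
    proof (rule sum.cong[OF refl])
      fix \<beta> assume "\<beta> \<in> {\<beta>. \<beta> \<le> \<alpha>}"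
      then have b: "\<beta> \<le> \<alpha>" by simp
      show "phi \<beta> * hompart k f (\<alpha> - \<beta>) = phi \<beta> * f (\<alpha> - \<beta>)"
      proof (cases "mabs \<beta> = r")
        case True
        then have "mabs (\<alpha> - \<beta>) = k" unfolding k_def using mabs_diff[OF b] by simp
        then show ?thesis unfolding hompart_def by simp
      next
        case False then show ?thesis using phz by simp
      qed
    qed
    ultimately show ?thesis by simp
  qed
qed

end

theorem theorem3:
  fixes m r :: nat and T :: "'n::finite coeffs \<Rightarrow> 'n coeffs"
  assumes "m \<ge> 1"
    and "bounded_op m T"
    and "\<forall>j. \<forall>f\<in>Hhom m j. T f \<in> Hhom m (j + r)"
    and "\<forall>F\<in>Hn m. Mz'_adj m (T (Mz' m F)) =
           P_ImMz_adj m (oplus_op (\<lambda>f. \<Sum>j<m. (\<lambda>\<alpha>. complex_of_int ((-1) ^ j * int (m choose (j + 1)))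
                                      * (sigma m ^^ j) T f \<alpha>)) (P_ImMz_adj m F))"
  shows "\<forall>f\<in>Hm m. T f = fmult (T one_fun) f"
proof -
  interpret Tsp m r T
    by unfold_locales (use assms in auto)
  show ?thesis using main unfolding phi_def by blast
qed


end
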